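(* The total cost incurred by the augmenting-path algorithm for online generalized network flow over all times $t=1,\dots,T$ is at most $\sum_{t=1}^{T}\mathrm{height}_T(s_t)$.
   Context: Generalized network flow instance: digraph $G=(V,E)$ without anti-parallel edges, sources with no incoming edges, sink $\tau$ with no outgoing edges, edge capacities $\mu_e>0$, costs $c_e>0$, gains $\gamma_e>0$; convention: every vertex $v\ne\tau$ has a dummy edge $v\tau$ of infinite capacity, gain $1$ and sufficiently large cost $B$. Online generalized network flow: sources $s_1,\dots,s_T$ (each with supply $1$) arrive one at a time with their outgoing edges; the algorithm maintains valid flows $x^{(t)}$ (nonnegative, within capacities, with $\sum_{e\in\delta^+(v)}x_e-\sum_{e\in\delta^-(v)}\gamma_ex_e$ equal to $1$ at arrived sources and $0$ at other vertices $\ne\tau$) and incurs cost $\sum_ec_e(x^{(t)}_e-x^{(t-1)}_e)_+$ at time $t$. Residual graph $G^x$: forward edge $uv$ (capacity $\mu_{uv}-x_{uv}$, cost $c_{uv}$, gain $\gamma_{uv}$) if $x_{uv}<\mu_{uv}$; backward edge $vu$ (capacity $\gamma_{uv}x_{uv}$, cost $0$, gain $1/\gamma_{uv}$) if $x_{uv}>0$. A fractional augmenting path from $s\ne\tau$ in $G^x$ is $f\ge0$ on residual edges with out-minus-gain-weighted-in flow $1$ at $s$ and $0$ at vertices other than $s,\tau$; cost $\sum_ec^x_ef_e$. It is an augmenting path if its support is a path from $s$ to $\tau$, or a cycle through $s$ avoiding $\tau$, or a cycle avoiding $s,\tau$ plus a path from $s$ to it internally disjoint from it. Augmenting $x$ by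 $\theta$ using $f$: $x_{uv}\gets x_{uv}+\theta f_{uv}$ on forward residual edges, $x_{uv}\gets x_{uv}-\theta f_{vu}/\gamma_{uv}$ on backward residual edges $vu$. The augmenting-path algorithm: $x^{(0)}=0$; at time $t$, add $s_t$, start from $x^{(t-1)}$ (zero on new edges), and while the outflow of $s_t$ is less than $1$, augment by the largest feasible $\theta$ (keeping $0\le x_e\le\mu_e$ and outflow of $s_t$ at most $1$) along a cheapest augmenting path from $s_t$ in the current residual graph; the result is $x^{(t)}$. $\mathrm{height}_t(v)$ for $v\ne\tau$ is the minimum cost of an augmenting path from $v$ in $G^{x^{(t)}}$. *)

theory Defs
  imports Main "HOL-Library.Extended_Real"
begin

text \<open>Edges are abstract objects of type 'e with a source ("src") and target ("dst")
vertex. Capacities are extended reals (dummy edges have capacity infinity).\<close>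

record ('v, 'e) gnet =
  verts :: "'v set"
  edges :: "'e set"
  src   :: "'e \<Rightarrow> 'v"
  dst   :: "'e \<Rightarrow> 'v"
  sink  :: "'v"
  cap   :: "'e \<Rightarrow> ereal"
  cost  :: "'e \<Rightarrow> real"
  gain  :: "'e \<Rightarrow> real"

definition gnet_instance :: "('v, 'e) gnet \<Rightarrow> real \<Rightarrow> (nat \<Rightarrow> 'v) \<Rightarrow> nat \<Rightarrow> bool" where
  "gnet_instance N B s T \<longleftrightarrow>
     finite (verts N) \<and> finite (edges N) \<and> sink N \<in> verts N \<and>
     (\<forall>e\<in>edges N. src N e \<in> verts N \<and> dst N e \<in> verts N) \<and>
     \<comment> \<open>no anti-parallel edges (this also excludes loops)\<close>
     (\<forall>e\<in>edges N. \<forall>e'\<in>edges N. \<not> (src N e = dst N e' \<and> dst N e = src N e')) \<and>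
     \<comment> \<open>sink has no outgoing edges\<close>
     (\<forall>e\<in>edges N. src N e \<noteq> sink N) \<and>
     (\<forall>e\<in>edges N. cap N e > 0 \<and> cost N e > 0 \<and> gain N e > 0) \<and>
     \<comment> \<open>sources s_1..s_T: distinct vertices other than the sink, with no incoming edges\<close>
     inj_on s {1..T} \<and>
     (\<forall>t\<in>{1..T}. s t \<in> verts N \<and> s t \<noteq> sink N \<and> (\<forall>e\<in>edges N. dst N e \<noteq> s t)) \<and>
     \<comment> \<open>dummy edges: every vertex other than the sink has an edge to the sink of
        infinite capacity, gain 1 and cost B\<close>
     B > 0 \<and>
     (\<forall>v\<in>verts N - {sink N}. \<exists>e\<in>edges N. src N e = v \<and> dst N e = sink N \<and>
         cap N e = \<infinity> \<and> gain N e = 1 \<and> cost N e = B)"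

definition future :: "(nat \<Rightarrow> 'v) \<Rightarrow> nat \<Rightarrow> nat \<Rightarrow> 'v \<Rightarrow> bool" where
  "future s T t v \<longleftrightarrow> (\<exists>j\<in>{t<..T}. v = s j)"

definition edges_at :: "('v, 'e) gnet \<Rightarrow> (nat \<Rightarrow> 'v) \<Rightarrow> nat \<Rightarrow> nat \<Rightarrow> 'e set" where
  "edges_at N s T t = {e \<in> edges N. \<not> future s T t (src N e)}"

definition verts_at :: "('v, 'e) gnet \<Rightarrow> (nat \<Rightarrow> 'v) \<Rightarrow> nat \<Rightarrow> nat \<Rightarrow> 'v set" where
  "verts_at N s T t = {v \<in> verts N. \<not> future s T t v}"

definition outflow :: "('v, 'e) gnet \<Rightarrow> 'e set \<Rightarrow> ('e \<Rightarrow> real) \<Rightarrow> 'v \<Rightarrow> real" where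
  "outflow N A x v = (\<Sum>e\<in>{e\<in>A. src N e = v}. x e)"

definition gain_inflow :: "('v, 'e) gnet \<Rightarrow> 'e set \<Rightarrow> ('e \<Rightarrow> real) \<Rightarrow> 'v \<Rightarrow> real" where
  "gain_inflow N A x v = (\<Sum>e\<in>{e\<in>A. dst N e = v}. gain N e * x e)"

section \<open>Residual graph: residual edge (e,True) is forward, (e,False) is backward\<close>

definition res_edges :: "('v, 'e) gnet \<Rightarrow> 'e set \<Rightarrow> ('e \<Rightarrow> real) \<Rightarrow> ('e \<times> bool) set" where
  "res_edges N A x =
     {(e, True) | e. e \<in> A \<and> ereal (x e) < cap N e} \<union> {(e, False) | e. e \<in> A \<and> x e > 0}"

fun rsrc :: "('v, 'e) gnet \<Rightarrow> 'e \<times> bool \<Rightarrow> 'v" where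
  "rsrc N (e, b) = (if b then src N e else dst N e)"

fun rdst :: "('v, 'e) gnet \<Rightarrow> 'e \<times> bool \<Rightarrow> 'v" where
  "rdst N (e, b) = (if b then dst N e else src N e)"

fun rcost :: "('v, 'e) gnet \<Rightarrow> 'e \<times> bool \<Rightarrow> real" where
  "rcost N (e, b) = (if b then cost N e else 0)"

fun rgain :: "('v, 'e) gnet \<Rightarrow> 'e \<times> bool \<Rightarrow> real" where
  "rgain N (e, b) = (if b then gain N e else 1 / gain N e)"

definition frac_aug :: "('v, 'e) gnet \<Rightarrow> 'e set \<Rightarrow> 'v set \<Rightarrow> ('e \<Rightarrow> real) \<Rightarrow> 'v
     \<Rightarrow> ('e \<times> bool \<Rightarrow> real) \<Rightarrow> bool" where
  "frac_aug N A W x s f \<longleftrightarrow>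
     (\<forall>r. f r \<ge> 0) \<and> (\<forall>r. r \<notin> res_edges N A x \<longrightarrow> f r = 0) \<and>
     (\<forall>v\<in>W - {sink N}.
        (\<Sum>r\<in>{r\<in>res_edges N A x. rsrc N r = v}. f r)
        - (\<Sum>r\<in>{r\<in>res_edges N A x. rdst N r = v}. rgain N r * f r)
        = (if v = s then 1 else 0))"

definition supp :: "('v, 'e) gnet \<Rightarrow> 'e set \<Rightarrow> ('e \<Rightarrow> real) \<Rightarrow> ('e \<times> bool \<Rightarrow> real) \<Rightarrow> ('e \<times> bool) set" where
  "supp N A x f = {r \<in> res_edges N A x. f r > 0}"

definition rwalk :: "('v, 'e) gnet \<Rightarrow> ('e \<times> bool) list \<Rightarrow> 'v \<Rightarrow> 'v \<Rightarrow> bool" where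
  "rwalk N es u w \<longleftrightarrow> es \<noteq> [] \<and> rsrc N (hd es) = u \<and> rdst N (last es) = w \<and>
     (\<forall>i. Suc i < length es \<longrightarrow> rdst N (es ! i) = rsrc N (es ! Suc i))"

definition pverts :: "('v, 'e) gnet \<Rightarrow> ('e \<times> bool) list \<Rightarrow> 'v list" where
  "pverts N es = rsrc N (hd es) # map (rdst N) es"

definition simple_path :: "('v, 'e) gnet \<Rightarrow> ('e \<times> bool) list \<Rightarrow> 'v \<Rightarrow> 'v \<Rightarrow> bool" where
  "simple_path N es u w \<longleftrightarrow> rwalk N es u w \<and> distinct (pverts N es)"

definition simple_cycle :: "('v, 'e) gnet \<Rightarrow> ('e \<times> bool) list \<Rightarrow> bool" where
  "simple_cycle N es \<longleftrightarrow> es \<noteq> [] \<and> rwalk N es (rsrc N (hd es)) (rsrc N (hd es)) \<and>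
     distinct (map (rdst N) es)"

definition aug_path :: "('v, 'e) gnet \<Rightarrow> 'e set \<Rightarrow> 'v set \<Rightarrow> ('e \<Rightarrow> real) \<Rightarrow> 'v
     \<Rightarrow> ('e \<times> bool \<Rightarrow> real) \<Rightarrow> bool" where
  "aug_path N A W x s f \<longleftrightarrow> frac_aug N A W x s f \<and>
     ((\<exists>P. simple_path N P s (sink N) \<and> supp N A x f = set P) \<or>
      (\<exists>C. simple_cycle N C \<and> s \<in> set (map (rdst N) C) \<and> sink N \<notin> set (map (rdst N) C) \<and>
           supp N A x f = set C) \<or>
      (\<exists>C P w. simple_cycle N C \<and> s \<notin> set (map (rdst N) C) \<and> sink N \<notin> set (map (rdst N) C) \<and>
           simple_path N P s w \<and> set (pverts N P) \<inter> set (map (rdst N) C) = {w} \<and>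
           supp N A x f = set P \<union> set C))"

definition aug_cost :: "('v, 'e) gnet \<Rightarrow> 'e set \<Rightarrow> ('e \<Rightarrow> real) \<Rightarrow> ('e \<times> bool \<Rightarrow> real) \<Rightarrow> real" where
  "aug_cost N A x f = (\<Sum>r\<in>res_edges N A x. rcost N r * f r)"

definition height :: "('v, 'e) gnet \<Rightarrow> 'e set \<Rightarrow> 'v set \<Rightarrow> ('e \<Rightarrow> real) \<Rightarrow> 'v \<Rightarrow> real" where
  "height N A W x v = Inf {aug_cost N A x f | f. aug_path N A W x v f}"

definition cheapest_aug_path :: "('v, 'e) gnet \<Rightarrow> 'e set \<Rightarrow> 'v set \<Rightarrow> ('e \<Rightarrow> real) \<Rightarrow> 'v
     \<Rightarrow> ('e \<times> bool \<Rightarrow> real) \<Rightarrow> bool" where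
  "cheapest_aug_path N A W x s f \<longleftrightarrow> aug_path N A W x s f \<and>
     (\<forall>g. aug_path N A W x s g \<longrightarrow> aug_cost N A x f \<le> aug_cost N A x g)"

definition augment :: "('v, 'e) gnet \<Rightarrow> ('e \<Rightarrow> real) \<Rightarrow> real \<Rightarrow> ('e \<times> bool \<Rightarrow> real) \<Rightarrow> 'e \<Rightarrow> real" where
  "augment N x \<theta> f = (\<lambda>e. x e + \<theta> * f (e, True) - \<theta> * f (e, False) / gain N e)"

definition feasible_step :: "('v, 'e) gnet \<Rightarrow> 'e set \<Rightarrow> 'v \<Rightarrow> ('e \<Rightarrow> real) \<Rightarrow> ('e \<times> bool \<Rightarrow> real)
     \<Rightarrow> real \<Rightarrow> bool" where
  "feasible_step N A s x f \<theta> \<longleftrightarrow> \<theta> \<ge> 0 \<and>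
     (\<forall>e\<in>A. 0 \<le> augment N x \<theta> f e \<and> ereal (augment N x \<theta> f e) \<le> cap N e) \<and>
     outflow N A (augment N x \<theta> f) s \<le> 1"

definition aug_step :: "('v, 'e) gnet \<Rightarrow> 'e set \<Rightarrow> 'v set \<Rightarrow> 'v \<Rightarrow> ('e \<Rightarrow> real) \<Rightarrow> ('e \<Rightarrow> real) \<Rightarrow> bool" where
  "aug_step N A W s x x' \<longleftrightarrow> (\<exists>f \<theta>. cheapest_aug_path N A W x s f \<and>
     feasible_step N A s x f \<theta> \<and> (\<forall>\<theta>'. feasible_step N A s x f \<theta>' \<longrightarrow> \<theta>' \<le> \<theta>) \<and>
     x' = augment N x \<theta> f)"

text \<open>The processing of one arriving source: a finite run of the while loop from x to x'.\<close>
definition phase :: "('v, 'e) gnet \<Rightarrow> 'e set \<Rightarrow> 'v set \<Rightarrow> 'v \<Rightarrow> ('e \<Rightarrow> real) \<Rightarrow> ('e \<Rightarrow> real) \<Rightarrow> bool" where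
  "phase N A W s x x' \<longleftrightarrow> (\<exists>ys. ys \<noteq> [] \<and> hd ys = x \<and> last ys = x' \<and>
     (\<forall>i. Suc i < length ys \<longrightarrow> outflow N A (ys ! i) s < 1 \<and> aug_step N A W s (ys ! i) (ys ! Suc i)) \<and>
     \<not> outflow N A x' s < 1)"

text \<open>X t is the flow x^(t) maintained by the algorithm after the arrival of s_t.\<close>
definition alg_run :: "('v, 'e) gnet \<Rightarrow> (nat \<Rightarrow> 'v) \<Rightarrow> nat \<Rightarrow> (nat \<Rightarrow> 'e \<Rightarrow> real) \<Rightarrow> bool" where
  "alg_run N s T X \<longleftrightarrow> X 0 = (\<lambda>_. 0) \<and>
     (\<forall>t\<in>{1..T}. phase N (edges_at N s T t) (verts_at N s T t) (s t) (X (t - 1)) (X t))"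

definition step_cost :: "('v, 'e) gnet \<Rightarrow> ('e \<Rightarrow> real) \<Rightarrow> ('e \<Rightarrow> real) \<Rightarrow> real" where
  "step_cost N x x' = (\<Sum>e\<in>edges N. cost N e * max 0 (x' e - x e))"

end

theory Submission
  imports Defs
begin


locale gsetup =
  fixes N :: "('v, 'e) gnet" and A :: "'e set" and W :: "'v set"
  assumes finA: "finite A" and finW: "finite W"
    and endpts: "\<And>e. e \<in> A \<Longrightarrow> src N e \<in> W \<and> dst N e \<in> W"
    and sinkW: "sink N \<in> W"
    and noloop: "\<And>e. e \<in> A \<Longrightarrow> src N e \<noteq> dst N e"
    and pos: "\<And>e. e \<in> A \<Longrightarrow> cost N e > 0 \<and> gain N e > 0"
    and dummy: "\<And>v. v \<in> W \<Longrightarrow> v \<noteq> sink N \<Longrightarrow> \<exists>e\<in>A. src N e = v \<and> dst N e = sink N \<and> cap N e = \<infinity>"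
begin

abbreviation "R x \<equiv> res_edges N A x"
abbreviation "\<tau> \<equiv> sink N"

definition net :: "('e \<Rightarrow> real) \<Rightarrow> ('e \<times> bool \<Rightarrow> real) \<Rightarrow> 'v \<Rightarrow> real" where
  "net x f v = (\<Sum>r\<in>{r\<in>R x. rsrc N r = v}. f r) - (\<Sum>r\<in>{r\<in>R x. rdst N r = v}. rgain N r * f r)"

definition pot_ok :: "('e \<Rightarrow> real) \<Rightarrow> ('v \<Rightarrow> real) \<Rightarrow> bool" where
  "pot_ok x p \<longleftrightarrow> (\<forall>v. 0 \<le> p v) \<and> p \<tau> = 0 \<and>
     (\<forall>r\<in>R x. p (rsrc N r) \<le> rcost N r + rgain N r * p (rdst N r))"

lemma R_sub: "R x \<subseteq> A \<times> UNIV"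
  unfolding res_edges_def by auto

lemma finR: "finite (R x)"
proof -
  have "R x \<subseteq> A \<times> UNIV" by (rule R_sub)
  moreover have "finite (A \<times> (UNIV::bool set))" using finA by simp
  ultimately show ?thesis by (rule finite_subset)
qed

lemma R_fst: "r \<in> R x \<Longrightarrow> fst r \<in> A"
  unfolding res_edges_def by auto

lemma R_gain: "r \<in> R x \<Longrightarrow> rgain N r > 0"
  using R_fst[of r x] pos by (cases r) auto

lemma R_cost: "r \<in> R x \<Longrightarrow> rcost N r \<ge> 0"
  using R_fst[of r x] pos by (cases r) (auto simp: less_imp_le)

lemma R_src: "r \<in> R x \<Longrightarrow> rsrc N r \<in> W"
  using R_fst[of r x] endpts by (cases r) auto

lemma R_dst: "r \<in> R x \<Longrightarrow> rdst N r \<in> W"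
  using R_fst[of r x] endpts by (cases r) auto

lemma R_noloop: "r \<in> R x \<Longrightarrow> rsrc N r \<noteq> rdst N r"
  using R_fst[of r x] noloop by (cases r) (auto dest: sym)

lemma net_eq: "frac_aug N A W x s f \<Longrightarrow> v \<in> W - {\<tau>} \<Longrightarrow> net x f v = (if v = s then 1 else 0)"
  unfolding frac_aug_def net_def by auto

lemma telescope:
  assumes fa: "frac_aug N A W x s f" and sW: "s \<in> W - {\<tau>}" and p0: "p \<tau> = 0"
  shows "(\<Sum>r\<in>R x. f r * (rcost N r + rgain N r * p (rdst N r) - p (rsrc N r)))
         = aug_cost N A x f - p s"
proof -
  have g1: "(\<Sum>r\<in>R x. f r * p (rsrc N r)) = (\<Sum>v\<in>W. p v * (\<Sum>r\<in>{r\<in>R x. rsrc N r = v}. f r))"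
  proof -
    have "(\<Sum>v\<in>W. p v * (\<Sum>r\<in>{r\<in>R x. rsrc N r = v}. f r))
        = (\<Sum>v\<in>W. (\<Sum>r\<in>{r\<in>R x. rsrc N r = v}. f r * p (rsrc N r)))"
      by (auto simp: sum_distrib_left mult.commute intro!: sum.cong)
    also have "\<dots> = (\<Sum>r\<in>R x. f r * p (rsrc N r))"
      by (rule sum.group) (use finR finW R_src in auto)
    finally show ?thesis by simp
  qed
  have g2: "(\<Sum>r\<in>R x. f r * (rgain N r * p (rdst N r))) = (\<Sum>v\<in>W. p v * (\<Sum>r\<in>{r\<in>R x. rdst N r = v}. rgain N r * f r))"
  proof -
    have "(\<Sum>v\<in>W. p v * (\<Sum>r\<in>{r\<in>R x. rdst N r = v}. rgain N r * f r))
        = (\<Sum>v\<in>W. (\<Sum>r\<in>{r\<in>R x. rdst N r = v}. f r * (rgain N r * p (rdst N r))))"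
      by (auto simp: sum_distrib_left mult_ac intro!: sum.cong)
    also have "\<dots> = (\<Sum>r\<in>R x. f r * (rgain N r * p (rdst N r)))"
      by (rule sum.group) (use finR finW R_dst in auto)
    finally show ?thesis by simp
  qed
  have g3: "(\<Sum>v\<in>W. p v * net x f v) = p s"
  proof -
    have "(\<Sum>v\<in>W. p v * net x f v) = (\<Sum>v\<in>W. if v = s then p v else 0)"
    proof (rule sum.cong)
      fix v assume v: "v \<in> W"
      show "p v * net x f v = (if v = s then p v else 0)"
      proof (cases "v = \<tau>")
        case True then show ?thesis using p0 sW by auto
      next
        case False then show ?thesis using net_eq[OF fa, of v] v by auto
      qed
    qed simp
    also have "\<dots> = p s" using sW finW by simp
    finally show ?thesis .
  qed
  have "(\<Sum>r\<in>R x. f r * (rcost N r + rgain N r * p (rdst N r) - p (rsrc N r)))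
      = (\<Sum>r\<in>R x. rcost N r * f r) + (\<Sum>r\<in>R x. f r * (rgain N r * p (rdst N r))) - (\<Sum>r\<in>R x. f r * p (rsrc N r))"
    by (simp add: algebra_simps sum.distrib sum_subtractf)
  also have "\<dots> = aug_cost N A x f - (\<Sum>v\<in>W. p v * net x f v)"
    unfolding g1 g2 aug_cost_def net_def by (simp add: algebra_simps sum.distrib sum_subtractf)
  finally show ?thesis using g3 by simp
qed

lemma pot_le_cost:
  assumes po: "pot_ok x p" and fa: "frac_aug N A W x s f" and sW: "s \<in> W - {\<tau>}"
  shows "p s \<le> aug_cost N A x f"
proof -
  have "0 \<le> (\<Sum>r\<in>R x. f r * (rcost N r + rgain N r * p (rdst N r) - p (rsrc N r)))"
    using po fa unfolding pot_ok_def frac_aug_def by (intro sum_nonneg mult_nonneg_nonneg) auto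
  then show ?thesis using telescope[OF fa sW] po unfolding pot_ok_def by simp
qed

end



fun chain :: "('v, 'e) gnet \<Rightarrow> 'v \<Rightarrow> ('e \<times> bool) list \<Rightarrow> 'v \<Rightarrow> bool" where
  "chain N a [] b \<longleftrightarrow> a = b"
| "chain N a (r # P) b \<longleftrightarrow> rsrc N r = a \<and> chain N (rdst N r) P b"

fun pcost :: "('v, 'e) gnet \<Rightarrow> ('e \<times> bool) list \<Rightarrow> real" where
  "pcost N [] = 0"
| "pcost N (r # P) = rcost N r + rgain N r * pcost N P"

fun pgain :: "('v, 'e) gnet \<Rightarrow> ('e \<times> bool) list \<Rightarrow> real" where
  "pgain N [] = 1"
| "pgain N (r # P) = rgain N r * pgain N P"

fun pflow :: "('v, 'e) gnet \<Rightarrow> ('e \<times> bool) list \<Rightarrow> 'e \<times> bool \<Rightarrow> real" where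
  "pflow N [] = (\<lambda>_. 0)"
| "pflow N (r # P) = (\<lambda>y. (if y = r then 1 else 0) + rgain N r * pflow N P y)"

definition cyc :: "('v, 'e) gnet \<Rightarrow> ('e \<times> bool) list \<Rightarrow> real" where
  "cyc N C = pcost N C / (1 - pgain N C)"

definition scost :: "('v, 'e) gnet \<Rightarrow> ('e \<times> bool) list \<Rightarrow> ('e \<times> bool) list \<Rightarrow> real" where
  "scost N P C = pcost N P + pgain N P * cyc N C"

lemma chain_append: "chain N a (P @ Q) b \<longleftrightarrow> (\<exists>m. chain N a P m \<and> chain N m Q b)"
  by (induction P arbitrary: a) auto

lemma pcost_append: "pcost N (P @ Q) = pcost N P + pgain N P * pcost N Q"
  by (induction P) (auto simp: algebra_simps)

lemma pgain_append: "pgain N (P @ Q) = pgain N P * pgain N Q"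
  by (induction P) (auto simp: algebra_simps)

lemma chain_last: "chain N a P b \<Longrightarrow> last (a # map (rdst N) P) = b"
  by (induction P arbitrary: a) auto

lemma chain_take_drop:
  assumes "chain N a P b" "k \<le> length P"
  shows "chain N a (take k P) ((a # map (rdst N) P) ! k) \<and> chain N ((a # map (rdst N) P) ! k) (drop k P) b"
  using assms
proof (induction P arbitrary: a k)
  case Nil then show ?case by auto
next
  case (Cons r P)
  show ?case
  proof (cases k)
    case 0 then show ?thesis using Cons by auto
  next
    case (Suc j)
    have "chain N (rdst N r) P b" using Cons.prems by simp
    from Cons.IH[OF this, of j] Suc Cons.prems show ?thesis
      by (cases P) auto
  qed
qed

lemma rwalk_chain: "rwalk N P a b \<longleftrightarrow> P \<noteq> [] \<and> chain N a P b"
proof (induction P arbitrary: a)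
  case Nil then show ?case by (simp add: rwalk_def)
next
  case (Cons r P)
  show ?case
  proof (cases P)
    case Nil then show ?thesis by (auto simp: rwalk_def)
  next
    case (Cons r' P')
    have "rwalk N (r # P) a b \<longleftrightarrow> rsrc N r = a \<and> rdst N r = rsrc N (hd P) \<and> rwalk N P (rdst N r) b"
    proof
      assume h: "rwalk N (r # P) a b"
      have "rdst N r = rsrc N (hd P)" using h Cons unfolding rwalk_def
        by (metis Suc_less_eq length_Cons list.sel(1) nth_Cons_0 nth_Cons_Suc zero_less_Suc)
      moreover have "\<forall>i. Suc i < length P \<longrightarrow> rdst N (P ! i) = rsrc N (P ! Suc i)"
      proof (intro allI impI)
        fix i assume "Suc i < length P"
        then have "Suc (Suc i) < length (r # P)" by simp
        then show "rdst N (P ! i) = rsrc N (P ! Suc i)" using h unfolding rwalk_def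
          by (metis nth_Cons_Suc)
      qed
      ultimately show "rsrc N r = a \<and> rdst N r = rsrc N (hd P) \<and> rwalk N P (rdst N r) b"
        using h Cons unfolding rwalk_def by auto
    next
      assume h: "rsrc N r = a \<and> rdst N r = rsrc N (hd P) \<and> rwalk N P (rdst N r) b"
      show "rwalk N (r # P) a b" unfolding rwalk_def
      proof (intro conjI allI impI)
        fix i assume i: "Suc i < length (r # P)"
        show "rdst N ((r # P) ! i) = rsrc N ((r # P) ! Suc i)"
        proof (cases i)
          case 0 then show ?thesis using h Cons by simp
        next
          case (Suc j) then show ?thesis using h i unfolding rwalk_def by auto
        qed
      qed (use h Cons in \<open>auto simp: rwalk_def\<close>)
    qed
    then show ?thesis using Cons.IH Cons by (cases P) auto
  qed
qed

lemma pverts_eq: "P \<noteq> [] \<Longrightarrow> chain N a P b \<Longrightarrow> pverts N P = a # map (rdst N) P"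
  by (cases P) (auto simp: pverts_def)

context gsetup begin

lemma pgain_pos: "set P \<subseteq> R x \<Longrightarrow> pgain N P > 0"
proof (induction P)
  case (Cons r P)
  then have "r \<in> R x" by simp
  then have "rgain N r > 0" by (rule R_gain)
  moreover have "pgain N P > 0" using Cons by simp
  ultimately show ?case by (simp del: rgain.simps)
qed simp

lemma pcost_nonneg: "set P \<subseteq> R x \<Longrightarrow> pcost N P \<ge> 0"
  by (induction P) (auto intro!: add_nonneg_nonneg mult_nonneg_nonneg R_cost less_imp_le[OF R_gain])

lemma cyc_nonneg: "set C \<subseteq> R x \<Longrightarrow> pgain N C < 1 \<Longrightarrow> cyc N C \<ge> 0"
  unfolding cyc_def using pcost_nonneg by auto

lemma pflow_nonneg: "set P \<subseteq> R x \<Longrightarrow> pflow N P y \<ge> 0"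
  by (induction P) (auto intro!: add_nonneg_nonneg mult_nonneg_nonneg less_imp_le[OF R_gain])

lemma pflow_pos: "set P \<subseteq> R x \<Longrightarrow> y \<in> set P \<Longrightarrow> pflow N P y > 0"
proof (induction P)
  case Nil then show ?case by simp
next
  case (Cons r P)
  have "r \<in> R x" using Cons.prems by simp
  then have g: "rgain N r > 0" by (rule R_gain)
  have "set P \<subseteq> R x" using Cons.prems by simp
  then have nn: "pflow N P y \<ge> 0" by (rule pflow_nonneg)
  show ?case
  proof (cases "y = r")
    case True then show ?thesis using g nn by (simp add: add_pos_nonneg del: rgain.simps)
  next
    case False then show ?thesis using Cons g by (simp del: rgain.simps)
  qed
qed

lemma pflow_zero: "y \<notin> set P \<Longrightarrow> pflow N P y = 0"
  by (induction P) auto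

lemma net_lin: "net x (\<lambda>y. f y + c * g y) v = net x f v + c * net x g v"
  unfolding net_def by (simp add: sum.distrib sum_distrib_left algebra_simps)

lemma net_lin2: "net x (\<lambda>y. c * g y) v = c * net x g v"
  unfolding net_def by (simp add: sum.distrib sum_distrib_left algebra_simps)

lemma net_add: "net x (\<lambda>y. f y + g y) v = net x f v + net x g v"
  unfolding net_def by (simp add: sum.distrib sum_distrib_left algebra_simps)

lemma net_ind: "r \<in> R x \<Longrightarrow> net x (\<lambda>y. if y = r then 1 else 0) v
   = (if rsrc N r = v then 1 else 0) - rgain N r * (if rdst N r = v then 1 else 0)"
proof -
  assume r: "r \<in> R x"
  have f1: "finite {y\<in>R x. rsrc N y = v}" "finite {y\<in>R x. rdst N y = v}" using finR by auto
  have "(\<Sum>y\<in>{y\<in>R x. rdst N y = v}. rgain N y * (if y = r then 1 else 0))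
       = (\<Sum>y\<in>{y\<in>R x. rdst N y = v}. (if y = r then rgain N y else 0))"
    by (rule sum.cong) auto
  then show ?thesis unfolding net_def using f1 r by auto
qed

lemma net_pflow:
  "set P \<subseteq> R x \<Longrightarrow> chain N a P b \<Longrightarrow>
   net x (pflow N P) v = (if a = v then 1 else 0) - pgain N P * (if b = v then 1 else 0)"
proof (induction P arbitrary: a)
  case Nil then show ?case by (simp add: net_def)
next
  case (Cons r P)
  have "net x (pflow N (r # P)) v = net x (\<lambda>y. (if y = r then 1 else 0) + rgain N r * pflow N P y) v"
    by simp
  also have "\<dots> = net x (\<lambda>y. if y = r then 1 else 0) v + rgain N r * net x (pflow N P) v"
    by (rule net_lin)
  also have "\<dots> = ((if rsrc N r = v then 1 else 0) - rgain N r * (if rdst N r = v then 1 else 0))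
     + rgain N r * ((if rdst N r = v then 1 else 0) - pgain N P * (if b = v then 1 else 0))"
    using Cons.IH[of "rdst N r"] Cons.prems net_ind[of r x v] by (simp del: rgain.simps)
  also have "\<dots> = (if a = v then 1 else 0) - pgain N (r # P) * (if b = v then 1 else 0)"
    using Cons.prems by (simp add: algebra_simps del: rgain.simps)
  finally show ?case .
qed

lemma cost_lin: "aug_cost N A x (\<lambda>y. f y + c * g y) = aug_cost N A x f + c * aug_cost N A x g"
  unfolding aug_cost_def by (simp add: sum.distrib sum_distrib_left algebra_simps)

lemma cost_pflow: "set P \<subseteq> R x \<Longrightarrow> aug_cost N A x (pflow N P) = pcost N P"
proof (induction P)
  case Nil then show ?case by (simp add: aug_cost_def)
next
  case (Cons r P)
  have "aug_cost N A x (pflow N (r # P)) = aug_cost N A x (\<lambda>y. (if y = r then 1 else 0) + rgain N r * pflow N P y)"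
    by simp
  also have "\<dots> = aug_cost N A x (\<lambda>y. if y = r then 1 else 0) + rgain N r * aug_cost N A x (pflow N P)"
    by (rule cost_lin)
  also have "aug_cost N A x (\<lambda>y. if y = r then 1 else 0) = rcost N r"
    unfolding aug_cost_def using Cons.prems finR[of x]
    by (simp add: if_distrib cong: if_cong)
  finally show ?case using Cons by simp
qed

end



context gsetup begin

definition ss :: "('e \<Rightarrow> real) \<Rightarrow> 'v \<Rightarrow> ('e \<times> bool) list \<Rightarrow> ('e \<times> bool) list \<Rightarrow> bool" where
  "ss x v P C \<longleftrightarrow> set P \<union> set C \<subseteq> R x \<and> distinct (v # map (rdst N) P) \<and>
     (C = [] \<longrightarrow> P \<noteq> [] \<and> chain N v P \<tau>) \<and>
     (C \<noteq> [] \<longrightarrow> (\<exists>w. chain N v P w \<and> chain N w C w \<and> distinct (map (rdst N) C) \<and>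
        set (v # map (rdst N) P) \<inter> set (map (rdst N) C) = {w} \<and>
        \<tau> \<notin> set (v # map (rdst N) P) \<and> \<tau> \<notin> set (map (rdst N) C) \<and> pgain N C < 1))"

lemma chain_hd: "C \<noteq> [] \<Longrightarrow> chain N a C b \<Longrightarrow> rsrc N (hd C) = a"
  by (cases C) auto

lemma ss_aug:
  assumes ss: "ss x v P C" and vW: "v \<in> W - {\<tau>}"
  shows "\<exists>g. aug_path N A W x v g \<and> aug_cost N A x g = scost N P C"
proof (cases "C = []")
  case True
  then have sub: "set P \<subseteq> R x" and dist: "distinct (v # map (rdst N) P)" and ne: "P \<noteq> []"
    and ch: "chain N v P \<tau>" using ss unfolding ss_def by auto
  define g where "g = pflow N P"
  have fa: "frac_aug N A W x v g"
    unfolding frac_aug_def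
  proof (intro conjI allI impI ballI)
    fix r show "0 \<le> g r" unfolding g_def using pflow_nonneg[OF sub] .
  next
    fix r assume "r \<notin> R x" then show "g r = 0" unfolding g_def using sub by (intro pflow_zero) auto
  next
    fix u assume u: "u \<in> W - {\<tau>}"
    have "net x g u = (if v = u then 1 else 0) - pgain N P * (if \<tau> = u then 1 else 0)"
      unfolding g_def by (rule net_pflow[OF sub ch])
    then show "(\<Sum>r\<in>{r \<in> R x. rsrc N r = u}. g r) - (\<Sum>r\<in>{r \<in> R x. rdst N r = u}. rgain N r * g r) = (if u = v then 1 else 0)"
      using u unfolding net_def by auto
  qed
  have supp: "supp N A x g = set P"
  proof -
    have "y \<in> R x \<and> pflow N P y > 0 \<longleftrightarrow> y \<in> set P" for y
      using sub pflow_pos[OF sub, of y] pflow_zero[of y P] by (cases "y \<in> set P") auto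
    then show ?thesis unfolding supp_def g_def by blast
  qed
  have sp: "simple_path N P v \<tau>"
    unfolding simple_path_def using rwalk_chain[of N P v \<tau>] ne ch dist pverts_eq[OF ne ch] by simp
  have "aug_path N A W x v g" unfolding aug_path_def using fa sp supp by blast
  moreover have "aug_cost N A x g = scost N P C"
    unfolding g_def scost_def cyc_def using cost_pflow[OF sub] True by simp
  ultimately show ?thesis by blast
next
  case False
  then obtain w where sub: "set P \<subseteq> R x" "set C \<subseteq> R x" and dist: "distinct (v # map (rdst N) P)"
    and ch: "chain N v P w" and chC: "chain N w C w" and distC: "distinct (map (rdst N) C)"
    and int: "set (v # map (rdst N) P) \<inter> set (map (rdst N) C) = {w}"
    and t1: "\<tau> \<notin> set (v # map (rdst N) P)" and t2: "\<tau> \<notin> set (map (rdst N) C)"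
    and gC: "pgain N C < 1"
    using ss unfolding ss_def by auto
  define k where "k = pgain N P / (1 - pgain N C)"
  have kpos: "k > 0" unfolding k_def using gC pgain_pos[OF sub(1)] by simp
  define g where "g = (\<lambda>y. pflow N P y + k * pflow N C y)"
  have fa: "frac_aug N A W x v g"
    unfolding frac_aug_def
  proof (intro conjI allI impI ballI)
    fix r show "0 \<le> g r" unfolding g_def using pflow_nonneg[OF sub(1), of r] pflow_nonneg[OF sub(2), of r] kpos
      by (metis add_nonneg_nonneg less_imp_le mult_nonneg_nonneg)
  next
    fix r assume "r \<notin> R x"
    then have "r \<notin> set P" "r \<notin> set C" using sub by auto
    then show "g r = 0" unfolding g_def by (simp add: pflow_zero)
  next
    fix u assume u: "u \<in> W - {\<tau>}"
    have "net x g u = net x (pflow N P) u + k * net x (pflow N C) u"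
      unfolding g_def by (rule net_lin)
    also have "\<dots> = (if v = u then 1 else 0) - pgain N P * (if w = u then 1 else 0)
        + k * ((if w = u then 1 else 0) - pgain N C * (if w = u then 1 else 0))"
      using net_pflow[OF sub(1) ch] net_pflow[OF sub(2) chC] by simp
    also have "\<dots> = (if v = u then 1 else 0)"
      unfolding k_def using gC by (auto simp add: field_simps)
    finally show "(\<Sum>r\<in>{r \<in> R x. rsrc N r = u}. g r) - (\<Sum>r\<in>{r \<in> R x. rdst N r = u}. rgain N r * g r) = (if u = v then 1 else 0)"
      unfolding net_def by auto
  qed
  have gpos: "g y > 0 \<longleftrightarrow> y \<in> set P \<union> set C" for y
  proof -
    have a: "pflow N P y \<ge> 0" "pflow N C y \<ge> 0" using pflow_nonneg sub by auto
    have b: "y \<in> set P \<Longrightarrow> pflow N P y > 0" "y \<in> set C \<Longrightarrow> pflow N C y > 0"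
      using pflow_pos sub by auto
    have c: "y \<notin> set P \<Longrightarrow> pflow N P y = 0" "y \<notin> set C \<Longrightarrow> pflow N C y = 0"
      using pflow_zero by auto
    show ?thesis unfolding g_def using a b c kpos
      by (cases "y \<in> set P"; cases "y \<in> set C") (auto simp: add_pos_nonneg add_nonneg_pos)
  qed
  have supp: "supp N A x g = set P \<union> set C"
    unfolding supp_def using gpos sub by auto
  have cost: "aug_cost N A x g = scost N P C"
  proof -
    have "aug_cost N A x g = aug_cost N A x (pflow N P) + k * aug_cost N A x (pflow N C)"
      unfolding g_def by (rule cost_lin)
    then show ?thesis unfolding scost_def cyc_def k_def using cost_pflow[OF sub(1)] cost_pflow[OF sub(2)]
      by simp
  qed
  have scC: "simple_cycle N C"
    unfolding simple_cycle_def using False chC distC rwalk_chain[of N C w w] chain_hd[OF False chC] by simp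
  have wC: "w \<in> set (map (rdst N) C)" using int by auto
  show ?thesis
  proof (cases "P = []")
    case True
    then have "v = w" using ch by simp
    then have "aug_path N A W x v g" unfolding aug_path_def using fa scC wC t2 supp True by auto
    then show ?thesis using cost by blast
  next
    case Pne: False
    have "last (v # map (rdst N) P) = w" using chain_last[OF ch] .
    then have "w \<in> set (map (rdst N) P)" using Pne by (cases P rule: rev_cases) auto
    then have vw: "v \<noteq> w" using dist by auto
    have vC: "v \<notin> set (map (rdst N) C)" using int vw by auto
    have sp: "simple_path N P v w"
      unfolding simple_path_def using rwalk_chain[of N P v w] Pne ch dist pverts_eq[OF Pne ch] by simp
    have "set (pverts N P) \<inter> set (map (rdst N) C) = {w}" using int pverts_eq[OF Pne ch] by simp
    then have "\<exists>C' P' w'. simple_cycle N C' \<and> v \<notin> set (map (rdst N) C') \<and> \<tau> \<notin> set (map (rdst N) C') \<and>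
           simple_path N P' v w' \<and> set (pverts N P') \<inter> set (map (rdst N) C') = {w'} \<and>
           supp N A x g = set P' \<union> set C'"
      using scC vC t2 sp supp by blast
    then have "aug_path N A W x v g" unfolding aug_path_def using fa by blast
    then show ?thesis using cost by blast
  qed
qed

end



lemma ineq_choice:
  fixes c g Pre sig Suf :: real
  assumes "c \<ge> 0" "g > 0" "Pre \<ge> 0" "sig > 0" "Suf \<ge> 0"
  shows "Suf \<le> c + g * (Pre + sig * Suf) \<or>
         (g * sig < 1 \<and> (c + g * Pre) / (1 - g * sig) \<le> c + g * (Pre + sig * Suf))"
proof (cases "g * sig < 1")
  case False
  then have "Suf \<le> (g * sig) * Suf" using assms by (simp add: mult_le_cancel_right1)
  also have "\<dots> \<le> c + g * (Pre + sig * Suf)" using assms by (simp add: algebra_simps)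
  finally show ?thesis by simp
next
  case True
  define K where "K = (c + g * Pre) / (1 - g * sig)"
  have K: "K * (1 - g * sig) = c + g * Pre" unfolding K_def using True by simp
  show ?thesis
  proof (cases "Suf \<le> K")
    case True
    then have "Suf * (1 - g * sig) \<le> K * (1 - g * sig)" using \<open>g * sig < 1\<close> by (simp add: mult_right_mono)
    then have "Suf * (1 - g * sig) \<le> c + g * Pre" using K by simp
    then show ?thesis by (simp add: algebra_simps)
  next
    case False
    have "K = c + g * Pre + g * sig * K" using K by (simp add: algebra_simps)
    also have "\<dots> \<le> c + g * Pre + g * sig * Suf" using False assms
      by (simp add: mult_left_mono less_imp_le)
    finally show ?thesis using True unfolding K_def by (simp add: algebra_simps)
  qed
qed

lemma drop_vl: "k \<le> length P \<Longrightarrow> drop k (v # map f P) = (v # map f P) ! k # map f (drop k P)"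
proof (cases k)
  case 0 then show ?thesis by simp
next
  case (Suc j)
  assume "k \<le> length P"
  then have "j < length P" using Suc by simp
  then have "drop j P = P ! j # drop (Suc j) P" by (rule Cons_nth_drop_Suc[symmetric])
  then show ?thesis using Suc \<open>j < length P\<close> by (simp add: drop_map)
qed

lemma take_vl: "take (Suc k) (v # map f P) = v # map f (take k P)"
  by (simp add: take_map)

lemma not_in_take: "distinct xs \<Longrightarrow> j < length xs \<Longrightarrow> n \<le> j \<Longrightarrow> xs ! j \<notin> set (take n xs)"
proof
  assume d: "distinct xs" and j: "j < length xs" and n: "n \<le> j" and "xs ! j \<in> set (take n xs)"
  then obtain i where i: "i < length (take n xs)" "take n xs ! i = xs ! j" by (auto simp: in_set_conv_nth)
  then have "i < n" "i < length xs" "xs ! i = xs ! j" by auto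
  then have "i = j" using d j nth_eq_iff_index_eq by blast
  then show False using \<open>i < n\<close> n by simp
qed

lemma in_take: "k < n \<Longrightarrow> k < length xs \<Longrightarrow> xs ! k \<in> set (take n xs)"
  by (metis in_set_conv_nth length_take min_less_iff_conj nth_take)

lemma cyc_rot:
  assumes "pgain N (C1 @ C2) < 1"
  shows "cyc N (C1 @ C2) = pcost N C1 + pgain N C1 * cyc N (C2 @ C1)"
proof -
  have d: "1 - pgain N C1 * pgain N C2 \<noteq> 0" using assms pgain_append[of N C1 C2] by simp
  have e: "pgain N C2 * pgain N C1 = pgain N C1 * pgain N C2" by simp
  show ?thesis unfolding cyc_def pcost_append pgain_append e using d
    by (simp add: field_simps)
qed




context gsetup begin

lemma surgery:
  assumes r: "r \<in> R x" and u: "rsrc N r = u" and v: "rdst N r = v" and ut: "u \<noteq> \<tau>" and vt: "v \<noteq> \<tau>"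
    and ss: "ss x v P C"
  shows "\<exists>P' C'. ss x u P' C' \<and> scost N P' C' \<le> rcost N r + rgain N r * scost N P C"
proof -
  define vl where "vl = v # map (rdst N) P"
  define cl where "cl = map (rdst N) C"
  have uv: "u \<noteq> v" using R_noloop[OF r] u v by simp
  have subP: "set P \<subseteq> R x" and subC: "set C \<subseteq> R x" and distvl: "distinct vl"
    using ss unfolding ss_def vl_def by auto
  have c0: "rcost N r \<ge> 0" using R_cost[OF r] .
  have g0: "rgain N r > 0" using R_gain[OF r] .
  obtain b where chP: "chain N v P b" and bdef: "C = [] \<Longrightarrow> b = \<tau>"
    and Cne: "C \<noteq> [] \<Longrightarrow> chain N b C b \<and> distinct cl \<and> set vl \<inter> set cl = {b} \<and> \<tau> \<notin> set vl \<and> \<tau> \<notin> set cl \<and> pgain N C < 1"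
    using ss unfolding ss_def vl_def cl_def by (cases "C = []") auto
  have lastvl: "last vl = b" unfolding vl_def using chain_last[OF chP] .
  have lenvl: "length vl = Suc (length P)" unfolding vl_def by simp
  have scnn: "scost N P C \<ge> 0"
  proof (cases "C = []")
    case True then show ?thesis unfolding scost_def cyc_def using pcost_nonneg[OF subP] by simp
  next
    case False then show ?thesis unfolding scost_def using pcost_nonneg[OF subP] pgain_pos[OF subP]
        cyc_nonneg[OF subC] Cne by simp
  qed
  show ?thesis
  proof (cases "u \<in> set vl")
    case True
    then obtain k where k: "k < length vl" "vl ! k = u" by (auto simp: in_set_conv_nth)
    have k0: "k \<noteq> 0" using k uv unfolding vl_def by (cases k) auto
    have kP: "k \<le> length P" using k lenvl by simp
    have td: "chain N v (take k P) u" "chain N u (drop k P) b"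
      using chain_take_drop[OF chP kP] k unfolding vl_def by auto
    define P1 where "P1 = take k P"
    define P2 where "P2 = drop k P"
    have PP: "P = P1 @ P2" unfolding P1_def P2_def by simp
    have sub1: "set P1 \<subseteq> R x" and sub2: "set P2 \<subseteq> R x"
      using subP unfolding P1_def P2_def by (auto dest: in_set_takeD in_set_dropD)
    have dvl: "drop k vl = u # map (rdst N) P2"
      unfolding vl_def P2_def using drop_vl[OF kP, of v "rdst N"] k unfolding vl_def by simp
    have tvl: "take (Suc k) vl = v # map (rdst N) P1"
      unfolding vl_def P1_def by (rule take_vl)
    have kltP: "C = [] \<Longrightarrow> k < length P"
    proof (rule ccontr)
      assume "C = []" "\<not> k < length P"
      then have "k = length P" using kP by simp
      then have "vl ! k = last vl" unfolding vl_def by (simp add: last_conv_nth)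
      then show False using k lastvl bdef \<open>C = []\<close> ut by simp
    qed
    have cost_split: "scost N P C = pcost N P1 + pgain N P1 * scost N P2 C"
      unfolding scost_def PP pcost_append pgain_append by (simp add: algebra_simps)
    have opt1: "ss x u P2 C"
      unfolding ss_def
    proof (intro conjI impI)
      show "set P2 \<union> set C \<subseteq> R x" using sub2 subC by simp
      show "distinct (u # map (rdst N) P2)" using distvl dvl by (metis distinct_drop)
    next
      assume "C = []"
      then show "P2 \<noteq> []" unfolding P2_def using kltP by simp
      show "chain N u P2 \<tau>" using td bdef \<open>C = []\<close> unfolding P2_def by simp
    next
      assume Cn: "C \<noteq> []"
      have "last (drop k vl) = b" using lastvl k by (simp add: last_drop)
      then have bin: "b \<in> set (u # map (rdst N) P2)" using dvl by (metis last_in_set list.distinct(1))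
      have "set (u # map (rdst N) P2) \<subseteq> set vl" using dvl by (metis set_drop_subset)
      then have "set (u # map (rdst N) P2) \<inter> set (map (rdst N) C) = {b}"
        using Cne[OF Cn] bin unfolding cl_def by blast
      moreover have "\<tau> \<notin> set (u # map (rdst N) P2)" using Cne[OF Cn] \<open>set (u # map (rdst N) P2) \<subseteq> set vl\<close> by blast
      ultimately show "\<exists>w. chain N u P2 w \<and> chain N w C w \<and> distinct (map (rdst N) C) \<and>
        set (u # map (rdst N) P2) \<inter> set (map (rdst N) C) = {w} \<and>
        \<tau> \<notin> set (u # map (rdst N) P2) \<and> \<tau> \<notin> set (map (rdst N) C) \<and> pgain N C < 1"
        using Cne[OF Cn] td unfolding P2_def cl_def by blast
    qed
    have suf_nn: "scost N P2 C \<ge> 0"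
    proof (cases "C = []")
      case True then show ?thesis unfolding scost_def cyc_def using pcost_nonneg[OF sub2] by simp
    next
      case False then show ?thesis unfolding scost_def using pcost_nonneg[OF sub2] pgain_pos[OF sub2]
          cyc_nonneg[OF subC] Cne by simp
    qed
    from ineq_choice[OF c0 g0 pcost_nonneg[OF sub1] pgain_pos[OF sub1] suf_nn]
    show ?thesis
    proof
      assume "scost N P2 C \<le> rcost N r + rgain N r * (pcost N P1 + pgain N P1 * scost N P2 C)"
      then show ?thesis using opt1 cost_split by auto
    next
      assume h: "rgain N r * pgain N P1 < 1 \<and>
        (rcost N r + rgain N r * pcost N P1) / (1 - rgain N r * pgain N P1)
          \<le> rcost N r + rgain N r * (pcost N P1 + pgain N P1 * scost N P2 C)"
      have opt2: "ss x u [] (r # P1)"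
        unfolding ss_def
      proof (intro conjI impI)
        show "set [] \<union> set (r # P1) \<subseteq> R x" using r sub1 by simp
        show "distinct (u # map (rdst N) [])" by simp
        show "r # P1 = [] \<Longrightarrow> [] \<noteq> []" by simp
        show "r # P1 = [] \<Longrightarrow> chain N u [] \<tau>" by simp
      next
        have mr: "map (rdst N) (r # P1) = take (Suc k) vl" using tvl v by simp
        have uin: "u \<in> set (take (Suc k) vl)" using in_take[of k "Suc k" vl] k by simp
        have tnot: "\<tau> \<notin> set (take (Suc k) vl)"
        proof (cases "C = []")
          case True
          have "vl \<noteq> []" unfolding vl_def by simp
          then have "vl ! length P = last vl" using lenvl by (simp add: last_conv_nth)
          then have "\<tau> = vl ! length P" using lastvl bdef[OF True] by simp
          then show ?thesis using not_in_take[OF distvl, of "length P" "Suc k"] kltP[OF True] lenvl by simp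
        next
          case False then show ?thesis using Cne by (meson in_set_takeD)
        qed
        show "\<exists>w. chain N u [] w \<and> chain N w (r # P1) w \<and> distinct (map (rdst N) (r # P1)) \<and>
          set (u # map (rdst N) []) \<inter> set (map (rdst N) (r # P1)) = {w} \<and>
          \<tau> \<notin> set (u # map (rdst N) []) \<and> \<tau> \<notin> set (map (rdst N) (r # P1)) \<and> pgain N (r # P1) < 1"
          apply (rule exI[of _ u])
          using td(1) u v mr uin tnot ut h distvl unfolding P1_def
          by (auto simp del: rgain.simps)
      qed
      have "scost N [] (r # P1) = (rcost N r + rgain N r * pcost N P1) / (1 - rgain N r * pgain N P1)"
        unfolding scost_def cyc_def by (simp del: rgain.simps rcost.simps)
      then show ?thesis using opt2 h cost_split by (intro exI[of _ "[]"] exI[of _ "r # P1"]) (auto simp del: rgain.simps rcost.simps)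
    qed
  next
    case unvl: False
    show ?thesis
    proof (cases "u \<in> set cl")
      case False
      have "ss x u (r # P) C"
        unfolding ss_def
      proof (intro conjI impI)
        show "set (r # P) \<union> set C \<subseteq> R x" using r subP subC by simp
        show "distinct (u # map (rdst N) (r # P))" using distvl unvl v unfolding vl_def by simp
      next
        assume "C = []" then show "r # P \<noteq> []" "chain N u (r # P) \<tau>" using u v chP bdef by auto
      next
        assume Cn: "C \<noteq> []"
        have "set (u # map (rdst N) (r # P)) = insert u (set vl)" using v unfolding vl_def by simp
        then show "\<exists>w. chain N u (r # P) w \<and> chain N w C w \<and> distinct (map (rdst N) C) \<and>
          set (u # map (rdst N) (r # P)) \<inter> set (map (rdst N) C) = {w} \<and>
          \<tau> \<notin> set (u # map (rdst N) (r # P)) \<and> \<tau> \<notin> set (map (rdst N) C) \<and> pgain N C < 1"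
          using Cne[OF Cn] False u v chP ut unfolding cl_def by auto
      qed
      moreover have "scost N (r # P) C = rcost N r + rgain N r * scost N P C"
        unfolding scost_def by (simp add: algebra_simps del: rgain.simps rcost.simps)
      ultimately show ?thesis by (intro exI[of _ "r # P"] exI[of _ C]) simp
    next
      case True
      then have Cn: "C \<noteq> []" unfolding cl_def by auto
      note CC = Cne[OF Cn]
      obtain k where k: "k < length C" "rdst N (C ! k) = u" using True unfolding cl_def by (auto simp: in_set_conv_nth)
      define wl where "wl = b # map (rdst N) C"
      have wlk: "wl ! Suc k = u" unfolding wl_def using k by simp
      have bvl: "b \<in> set vl" using lastvl unfolding vl_def by (metis last_in_set list.distinct(1))
      have ub: "u \<noteq> b" using bvl unvl by auto
      have lastcl: "last cl = b" using chain_last[of N b C b] CC Cn unfolding cl_def by simp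
      have k1: "Suc k < length C"
      proof (rule ccontr)
        assume "\<not> Suc k < length C"
        then have "Suc k = length C" using k by simp
        then have "k = length C - 1" by simp
        then have "u = last cl" using k Cn unfolding cl_def by (simp add: last_conv_nth)
        then show False using lastcl ub by simp
      qed
      have td: "chain N b (take (Suc k) C) u" "chain N u (drop (Suc k) C) b"
        using chain_take_drop[of N b C b "Suc k"] CC k1 wlk unfolding wl_def by auto
      define C1 where "C1 = take (Suc k) C"
      define C2 where "C2 = drop (Suc k) C"
      have CCs: "C = C1 @ C2" unfolding C1_def C2_def by simp
      have sub1: "set C1 \<subseteq> R x" and sub2: "set C2 \<subseteq> R x"
        using subC unfolding C1_def C2_def by (auto dest: in_set_takeD in_set_dropD)
      have mC1: "map (rdst N) C1 = take (Suc k) cl" unfolding C1_def cl_def by (simp add: take_map)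
      have clsplit: "cl = map (rdst N) C1 @ map (rdst N) C2" unfolding cl_def CCs by simp
      have grot: "pgain N (C2 @ C1) = pgain N C" unfolding CCs pgain_append by simp
      have rot: "cyc N C = pcost N C1 + pgain N C1 * cyc N (C2 @ C1)"
        using cyc_rot[of N C1 C2] CC CCs by simp
      have cost_split: "scost N P C = pcost N (P @ C1) + pgain N (P @ C1) * cyc N (C2 @ C1)"
        unfolding scost_def rot pcost_append pgain_append by (simp add: algebra_simps)
      have opt1: "ss x u [] (C2 @ C1)"
        unfolding ss_def
      proof (intro conjI impI)
        show "set [] \<union> set (C2 @ C1) \<subseteq> R x" using sub1 sub2 by simp
        show "distinct (u # map (rdst N) [])" by simp
        show "C2 @ C1 = [] \<Longrightarrow> [] \<noteq> []" using k1 unfolding C2_def by simp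
        show "C2 @ C1 = [] \<Longrightarrow> chain N u [] \<tau>" using k1 unfolding C2_def by simp
        have "set (map (rdst N) (C2 @ C1)) = set cl" using clsplit by auto
        moreover have "distinct (map (rdst N) (C2 @ C1))" using CC clsplit by auto
        moreover have "chain N u (C2 @ C1) u" unfolding chain_append C1_def C2_def using td by blast
        ultimately show "\<exists>w. chain N u [] w \<and> chain N w (C2 @ C1) w \<and> distinct (map (rdst N) (C2 @ C1)) \<and>
          set (u # map (rdst N) []) \<inter> set (map (rdst N) (C2 @ C1)) = {w} \<and>
          \<tau> \<notin> set (u # map (rdst N) []) \<and> \<tau> \<notin> set (map (rdst N) (C2 @ C1)) \<and> pgain N (C2 @ C1) < 1"
          using True CC grot ut by auto
      qed
      have suf_nn: "cyc N (C2 @ C1) \<ge> 0" using cyc_nonneg[of "C2 @ C1" x] sub1 sub2 grot CC by simp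
      have subPC1: "set (P @ C1) \<subseteq> R x" using subP sub1 by simp
      from ineq_choice[OF c0 g0 pcost_nonneg[OF subPC1] pgain_pos[OF subPC1] suf_nn]
      show ?thesis
      proof
        assume "cyc N (C2 @ C1) \<le> rcost N r + rgain N r * (pcost N (P @ C1) + pgain N (P @ C1) * cyc N (C2 @ C1))"
        moreover have "scost N [] (C2 @ C1) = cyc N (C2 @ C1)" unfolding scost_def by simp
        ultimately show ?thesis using opt1 cost_split by (intro exI[of _ "[]"] exI[of _ "C2 @ C1"]) auto
      next
        assume h: "rgain N r * pgain N (P @ C1) < 1 \<and>
          (rcost N r + rgain N r * pcost N (P @ C1)) / (1 - rgain N r * pgain N (P @ C1))
           \<le> rcost N r + rgain N r * (pcost N (P @ C1) + pgain N (P @ C1) * cyc N (C2 @ C1))"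
        have opt2: "ss x u [] (r # P @ C1)"
          unfolding ss_def
        proof (intro conjI impI)
          show "set [] \<union> set (r # P @ C1) \<subseteq> R x" using r subP sub1 by simp
          show "distinct (u # map (rdst N) [])" by simp
          show "r # P @ C1 = [] \<Longrightarrow> [] \<noteq> []" by simp
          show "r # P @ C1 = [] \<Longrightarrow> chain N u [] \<tau>" by simp
          have mr: "map (rdst N) (r # P @ C1) = vl @ take (Suc k) cl" using v mC1 unfolding vl_def by simp
          have lenC: "length cl = length C" unfolding cl_def by simp
          have "cl \<noteq> []" using Cn unfolding cl_def by simp
          then have "b = cl ! (length C - 1)" using lastcl lenC by (metis last_conv_nth)
          then have bnot: "b \<notin> set (take (Suc k) cl)"
            using not_in_take[of cl "length C - 1" "Suc k"] CC lenC k1 Cn by simp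
          have "set vl \<inter> set (take (Suc k) cl) = {}"
          proof -
            { fix y assume y1: "y \<in> set vl" and y2: "y \<in> set (take (Suc k) cl)"
              then have "y \<in> set vl \<inter> set cl" by (auto dest: in_set_takeD)
              then have "y = b" using CC by blast
              then have False using bnot y2 by simp }
            then show ?thesis by blast
          qed
          then have dist: "distinct (vl @ take (Suc k) cl)" using distvl CC by simp
          have uin: "u \<in> set (take (Suc k) cl)" using in_take[of k "Suc k" cl] k unfolding cl_def by simp
          have tnot: "\<tau> \<notin> set (vl @ take (Suc k) cl)" using CC by (auto dest: in_set_takeD)
          have ch: "chain N u (r # P @ C1) u" unfolding chain.simps chain_append C1_def using u v chP td(1) by blast
          show "\<exists>w. chain N u [] w \<and> chain N w (r # P @ C1) w \<and> distinct (map (rdst N) (r # P @ C1)) \<and>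
            set (u # map (rdst N) []) \<inter> set (map (rdst N) (r # P @ C1)) = {w} \<and>
            \<tau> \<notin> set (u # map (rdst N) []) \<and> \<tau> \<notin> set (map (rdst N) (r # P @ C1)) \<and> pgain N (r # P @ C1) < 1"
            apply (rule exI[of _ u])
            using ch mr dist uin tnot ut h by (auto simp del: rgain.simps)
        qed
        have "scost N [] (r # P @ C1) = (rcost N r + rgain N r * pcost N (P @ C1)) / (1 - rgain N r * pgain N (P @ C1))"
          unfolding scost_def cyc_def by (simp del: rgain.simps rcost.simps)
        then show ?thesis using opt2 h cost_split by (intro exI[of _ "[]"] exI[of _ "r # P @ C1"]) (auto simp del: rgain.simps rcost.simps)
      qed
    qed
  qed
qed

end



context gsetup begin

lemma ss_nonneg: "ss x v P C \<Longrightarrow> scost N P C \<ge> 0"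
proof -
  assume ss: "ss x v P C"
  then have subP: "set P \<subseteq> R x" and subC: "set C \<subseteq> R x" unfolding ss_def by auto
  show ?thesis
  proof (cases "C = []")
    case True then show ?thesis unfolding scost_def cyc_def using pcost_nonneg[OF subP] by simp
  next
    case False
    then have "pgain N C < 1" using ss unfolding ss_def by auto
    then show ?thesis unfolding scost_def using pcost_nonneg[OF subP] pgain_pos[OF subP]
        cyc_nonneg[OF subC] by simp
  qed
qed

lemma ss_single: "r \<in> R x \<Longrightarrow> rsrc N r = u \<Longrightarrow> rdst N r = \<tau> \<Longrightarrow> u \<noteq> \<tau> \<Longrightarrow> ss x u [r] []"
  unfolding ss_def by auto

lemma dummy_res: "v \<in> W \<Longrightarrow> v \<noteq> \<tau> \<Longrightarrow> \<exists>r\<in>R x. rsrc N r = v \<and> rdst N r = \<tau>"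
proof -
  assume "v \<in> W" "v \<noteq> \<tau>"
  then obtain e where e: "e \<in> A" "src N e = v" "dst N e = \<tau>" "cap N e = \<infinity>" using dummy by blast
  then have "(e, True) \<in> R x" unfolding res_edges_def by auto
  then show ?thesis using e by (intro bexI[of _ "(e, True)"]) auto
qed

definition Q :: "('e \<Rightarrow> real) \<Rightarrow> 'v \<Rightarrow> real" where
  "Q x v = Inf {scost N P C | P C. ss x v P C}"

lemma Q_ne: "v \<in> W \<Longrightarrow> v \<noteq> \<tau> \<Longrightarrow> {scost N P C | P C. ss x v P C} \<noteq> {}"
  using dummy_res[of v x] ss_single by blast

lemma Q_bdd: "bdd_below {scost N P C | P C. ss x v P C}"
  unfolding bdd_below_def using ss_nonneg by blast

lemma Q_lower: "ss x v P C \<Longrightarrow> Q x v \<le> scost N P C"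
  unfolding Q_def by (rule cInf_lower) (use Q_bdd in auto)

lemma Q_greatest: "v \<in> W \<Longrightarrow> v \<noteq> \<tau> \<Longrightarrow> (\<And>P C. ss x v P C \<Longrightarrow> z \<le> scost N P C) \<Longrightarrow> z \<le> Q x v"
  unfolding Q_def by (rule cInf_greatest) (use Q_ne in auto)

lemma Q_nonneg: "v \<in> W \<Longrightarrow> v \<noteq> \<tau> \<Longrightarrow> 0 \<le> Q x v"
  using Q_greatest ss_nonneg by blast

lemma Q_ge_pot: "pot_ok x p \<Longrightarrow> v \<in> W \<Longrightarrow> v \<noteq> \<tau> \<Longrightarrow> p v \<le> Q x v"
proof -
  assume po: "pot_ok x p" and v: "v \<in> W" "v \<noteq> \<tau>"
  show ?thesis
  proof (rule Q_greatest[OF v])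
    fix P C assume "ss x v P C"
    then obtain g where g: "aug_path N A W x v g" "aug_cost N A x g = scost N P C"
      using ss_aug v by blast
    then have "frac_aug N A W x v g" unfolding aug_path_def by simp
    then show "p v \<le> scost N P C" using pot_le_cost[OF po] g v by fastforce
  qed
qed

lemma Q_bellman:
  assumes r: "r \<in> R x" and ut: "rsrc N r \<noteq> \<tau>" and vt: "rdst N r \<noteq> \<tau>"
  shows "Q x (rsrc N r) \<le> rcost N r + rgain N r * Q x (rdst N r)"
proof -
  have g: "rgain N r > 0" using R_gain[OF r] .
  have "(Q x (rsrc N r) - rcost N r) / rgain N r \<le> Q x (rdst N r)"
  proof (rule Q_greatest)
    show "rdst N r \<in> W" using R_dst[OF r] .
    show "rdst N r \<noteq> \<tau>" using vt .
    fix P C assume "ss x (rdst N r) P C"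
    then obtain P' C' where "ss x (rsrc N r) P' C'" "scost N P' C' \<le> rcost N r + rgain N r * scost N P C"
      using surgery[OF r refl refl ut vt] by blast
    then have "Q x (rsrc N r) \<le> rcost N r + rgain N r * scost N P C" using Q_lower by fastforce
    then show "(Q x (rsrc N r) - rcost N r) / rgain N r \<le> scost N P C" using g
      by (simp add: divide_le_eq algebra_simps)
  qed
  then show ?thesis using g by (simp add: divide_le_eq algebra_simps)
qed

definition qpot :: "('e \<Rightarrow> real) \<Rightarrow> ('v \<Rightarrow> real) \<Rightarrow> 'v \<Rightarrow> real" where
  "qpot x p v = (if v = \<tau> then 0 else if v \<in> W then Q x v else p v)"

lemma qpot_ok: "pot_ok x p \<Longrightarrow> pot_ok x (qpot x p)"
proof -
  assume po: "pot_ok x p"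
  show ?thesis unfolding pot_ok_def
  proof (intro conjI allI ballI)
    fix v show "0 \<le> qpot x p v" unfolding qpot_def using Q_nonneg po unfolding pot_ok_def by auto
  next
    show "qpot x p \<tau> = 0" unfolding qpot_def by simp
  next
    fix r assume r: "r \<in> R x"
    have nn: "0 \<le> qpot x p (rdst N r)" unfolding qpot_def using Q_nonneg po unfolding pot_ok_def by auto
    have c0: "rcost N r \<ge> 0" using R_cost[OF r] .
    have g0: "rgain N r > 0" using R_gain[OF r] .
    show "qpot x p (rsrc N r) \<le> rcost N r + rgain N r * qpot x p (rdst N r)"
    proof (cases "rsrc N r = \<tau>")
      case True then show ?thesis unfolding qpot_def using nn c0 g0
        by (simp add: qpot_def del: rgain.simps rcost.simps)
    next
      case ut: False
      show ?thesis
      proof (cases "rdst N r = \<tau>")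
        case True
        have "ss x (rsrc N r) [r] []" using ss_single[OF r refl True ut] .
        then have "Q x (rsrc N r) \<le> scost N [r] []" by (rule Q_lower)
        then show ?thesis unfolding qpot_def using True ut R_src[OF r]
          by (simp add: scost_def cyc_def del: rgain.simps rcost.simps)
      next
        case False
        then show ?thesis unfolding qpot_def using Q_bellman[OF r ut False] ut R_src[OF r] R_dst[OF r]
          by (simp del: rgain.simps rcost.simps)
      qed
    qed
  qed
qed

lemma qpot_ge: "pot_ok x p \<Longrightarrow> p v \<le> qpot x p v"
  unfolding qpot_def using Q_ge_pot[of x p v] unfolding pot_ok_def by auto

end



context gsetup begin

lemma step_pot:
  assumes po: "pot_ok x p" and ch: "cheapest_aug_path N A W x s f" and sW: "s \<in> W" "s \<noteq> \<tau>"
    and th: "\<theta> \<ge> 0"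
  shows "pot_ok (augment N x \<theta> f) (qpot x p) \<and> (\<forall>v. p v \<le> qpot x p v) \<and> aug_cost N A x f \<le> qpot x p s"
proof -
  define q where "q = qpot x p"
  have qo: "pot_ok x q" unfolding q_def using qpot_ok[OF po] .
  have ap: "aug_path N A W x s f" using ch unfolding cheapest_aug_path_def by simp
  then have fa: "frac_aug N A W x s f" unfolding aug_path_def by simp
  have fnn: "\<And>r. f r \<ge> 0" and fz: "\<And>r. r \<notin> R x \<Longrightarrow> f r = 0" using fa unfolding frac_aug_def by auto
  have qs: "q s = Q x s" unfolding q_def qpot_def using sW by simp
  have le1: "aug_cost N A x f \<le> Q x s"
  proof (rule Q_greatest[OF sW])
    fix P C assume "ss x s P C"
    then obtain g where g: "aug_path N A W x s g" "aug_cost N A x g = scost N P C"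
      using ss_aug sW by blast
    then show "aug_cost N A x f \<le> scost N P C" using ch unfolding cheapest_aug_path_def by metis
  qed
  have le2: "q s \<le> aug_cost N A x f" using pot_le_cost[OF qo fa] sW by simp
  have eq0: "(\<Sum>r\<in>R x. f r * (rcost N r + rgain N r * q (rdst N r) - q (rsrc N r))) = 0"
    using telescope[OF fa _ ] qo le1 le2 qs sW unfolding pot_ok_def by simp
  have tnn: "\<forall>r\<in>R x. 0 \<le> f r * (rcost N r + rgain N r * q (rdst N r) - q (rsrc N r))"
    using qo fnn unfolding pot_ok_def by (auto intro!: mult_nonneg_nonneg)
  have tight: "r \<in> R x \<Longrightarrow> f r > 0 \<Longrightarrow> q (rsrc N r) = rcost N r + rgain N r * q (rdst N r)" for r
  proof -
    assume r: "r \<in> R x" and fp: "f r > 0"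
    have "f r * (rcost N r + rgain N r * q (rdst N r) - q (rsrc N r)) = 0"
      using eq0 sum_nonneg_eq_0_iff[OF finR, of x "\<lambda>r. f r * (rcost N r + rgain N r * q (rdst N r) - q (rsrc N r))"] tnn r by blast
    then show ?thesis using fp by simp
  qed
  define x' where "x' = augment N x \<theta> f"
  have x'e: "x' e = x e + \<theta> * f (e, True) - \<theta> * f (e, False) / gain N e" for e
    unfolding x'_def augment_def by simp
  have qo': "pot_ok x' q"
    unfolding pot_ok_def
  proof (intro conjI allI ballI)
    fix v show "0 \<le> q v" using qo unfolding pot_ok_def by simp
  next
    show "q \<tau> = 0" using qo unfolding pot_ok_def by simp
  next
    fix r' assume r': "r' \<in> R x'"
    show "q (rsrc N r') \<le> rcost N r' + rgain N r' * q (rdst N r')"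
    proof (cases "r' \<in> R x")
      case True then show ?thesis using qo unfolding pot_ok_def by blast
    next
      case notin: False
      obtain e b where eb: "r' = (e, b)" by (cases r')
      have eA: "e \<in> A" using R_fst[OF r'] eb by simp
      have ga: "gain N e > 0" "cost N e > 0" using pos[OF eA] by auto
      show ?thesis
      proof (cases b)
        case True
        have c1: "ereal (x' e) < cap N e" using r' eb True unfolding res_edges_def by auto
        have c2: "\<not> ereal (x e) < cap N e" using notin eb True eA unfolding res_edges_def by auto
        have "x' e < x e"
        proof (rule ccontr)
          assume "\<not> x' e < x e"
          then have "ereal (x e) \<le> ereal (x' e)" by simp
          then show False using c1 c2 by (meson le_less_trans)
        qed
        then have "\<theta> * f (e, True) < \<theta> * f (e, False) / gain N e" using x'e[of e] by simp
        moreover have "0 \<le> \<theta> * f (e, True)" using th fnn by simp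
        ultimately have "f (e, False) \<noteq> 0" by auto
        then have fp: "f (e, False) > 0" using fnn[of "(e, False)"] by simp
        then have inR: "(e, False) \<in> R x" using fz by (cases "(e, False) \<in> R x") auto
        from tight[OF inR fp] have "q (dst N e) = q (src N e) / gain N e" by simp
        then have "q (src N e) = gain N e * q (dst N e)" using ga by (simp add: field_simps)
        then show ?thesis using eb True ga by simp
      next
        case False
        have c1: "x' e > 0" using r' eb False unfolding res_edges_def by auto
        have c2: "\<not> x e > 0" using notin eb False eA unfolding res_edges_def by auto
        have "\<theta> * f (e, True) > \<theta> * f (e, False) / gain N e" using x'e[of e] c1 c2 by simp
        moreover have "0 \<le> \<theta> * f (e, False) / gain N e" using th fnn ga by simp
        ultimately have "f (e, True) \<noteq> 0" by auto
        then have fp: "f (e, True) > 0" using fnn[of "(e, True)"] by simp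
        then have inR: "(e, True) \<in> R x" using fz by (cases "(e, True) \<in> R x") auto
        from tight[OF inR fp] have h: "q (src N e) = cost N e + gain N e * q (dst N e)" by simp
        have "q (dst N e) \<le> q (src N e) / gain N e" using h ga
          by (simp add: field_simps)
        then show ?thesis using eb False by simp
      qed
    qed
  qed
  show ?thesis using qo' le1 qs qpot_ge[OF po] unfolding q_def x'_def by simp
qed

end



context gsetup begin

lemma sum_res:
  assumes z: "\<And>r. r \<notin> R x \<Longrightarrow> g r = 0"
  shows "(\<Sum>r\<in>{r\<in>R x. P r}. g r) = (\<Sum>e\<in>{e\<in>A. P (e, True)}. g (e, True)) + (\<Sum>e\<in>{e\<in>A. P (e, False)}. g (e, False))"
proof -
  have fin: "finite {r \<in> A \<times> (UNIV::bool set). P r}" using finA by simp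
  have "(\<Sum>r\<in>{r\<in>R x. P r}. g r) = (\<Sum>r\<in>{r \<in> A \<times> UNIV. P r}. g r)"
    by (rule sum.mono_neutral_left[OF fin]) (use R_sub[of x] z in auto)
  also have "{r \<in> A \<times> UNIV. P r} = (\<lambda>e. (e, True)) ` {e\<in>A. P (e, True)} \<union> (\<lambda>e. (e, False)) ` {e\<in>A. P (e, False)}"
  proof (rule set_eqI)
    fix r :: "'e \<times> bool"
    obtain e b where r: "r = (e, b)" by (cases r)
    show "r \<in> {r \<in> A \<times> UNIV. P r} \<longleftrightarrow> r \<in> (\<lambda>e. (e, True)) ` {e\<in>A. P (e, True)} \<union> (\<lambda>e. (e, False)) ` {e\<in>A. P (e, False)}"
      unfolding r by (cases b) auto
  qed
  also have "(\<Sum>r\<in>\<dots>. g r) = (\<Sum>r\<in>(\<lambda>e. (e, True)) ` {e\<in>A. P (e, True)}. g r) + (\<Sum>r\<in>(\<lambda>e. (e, False)) ` {e\<in>A. P (e, False)}. g r)"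
    by (rule sum.union_disjoint) (use finA in auto)
  also have "\<dots> = (\<Sum>e\<in>{e\<in>A. P (e, True)}. g (e, True)) + (\<Sum>e\<in>{e\<in>A. P (e, False)}. g (e, False))"
    by (simp add: sum.reindex inj_on_def)
  finally show ?thesis .
qed

lemma augment_outside:
  assumes z: "\<And>r. r \<notin> R x \<Longrightarrow> f r = 0" and e: "e \<notin> A"
  shows "augment N x \<theta> f e = x e"
proof -
  have "(e, b) \<notin> R x" for b
  proof
    assume "(e, b) \<in> R x"
    then have "fst (e, b) \<in> A" by (rule R_fst)
    then show False using e by simp
  qed
  then show ?thesis unfolding augment_def using z by simp
qed

lemma outflow_step:
  assumes fa: "frac_aug N A W x s f" and sW: "s \<in> W" "s \<noteq> \<tau>" and noin: "\<And>e. e \<in> A \<Longrightarrow> dst N e \<noteq> s"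
  shows "outflow N A (augment N x \<theta> f) s = outflow N A x s + \<theta>"
proof -
  have z: "\<And>r. r \<notin> R x \<Longrightarrow> f r = 0" using fa unfolding frac_aug_def by auto
  have z2: "\<And>r. r \<notin> R x \<Longrightarrow> rgain N r * f r = 0" using z by simp
  have cons: "(\<Sum>r\<in>{r\<in>R x. rsrc N r = s}. f r) - (\<Sum>r\<in>{r\<in>R x. rdst N r = s}. rgain N r * f r) = 1"
    using fa sW unfolding frac_aug_def by auto
  have e1: "{e \<in> A. dst N e = s} = {}" using noin by auto
  have s1: "(\<Sum>r\<in>{r\<in>R x. rsrc N r = s}. f r) = (\<Sum>e\<in>{e\<in>A. src N e = s}. f (e, True))"
    using sum_res[of x f "\<lambda>r. rsrc N r = s", OF z] e1 by simp
  have s2: "(\<Sum>r\<in>{r\<in>R x. rdst N r = s}. rgain N r * f r) = (\<Sum>e\<in>{e\<in>A. src N e = s}. f (e, False) / gain N e)"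
    using sum_res[of x "\<lambda>r. rgain N r * f r" "\<lambda>r. rdst N r = s", OF z2] e1 by simp
  have one: "(\<Sum>e\<in>{e\<in>A. src N e = s}. f (e, True)) - (\<Sum>e\<in>{e\<in>A. src N e = s}. f (e, False) / gain N e) = 1"
    using cons unfolding s1 s2 .
  have "outflow N A (augment N x \<theta> f) s = (\<Sum>e\<in>{e\<in>A. src N e = s}. x e + \<theta> * f (e, True) - \<theta> * f (e, False) / gain N e)"
    unfolding outflow_def augment_def by simp
  also have "\<dots> = (\<Sum>e\<in>{e\<in>A. src N e = s}. x e + \<theta> * f (e, True)) - (\<Sum>e\<in>{e\<in>A. src N e = s}. \<theta> * (f (e, False) / gain N e))"
    by (simp only: sum_subtractf times_divide_eq_right)
  also have "\<dots> = outflow N A x s + \<theta> * (\<Sum>e\<in>{e\<in>A. src N e = s}. f (e, True)) - \<theta> * (\<Sum>e\<in>{e\<in>A. src N e = s}. f (e, False) / gain N e)"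
    unfolding outflow_def by (simp only: sum.distrib sum_distrib_left)
  also have "\<dots> = outflow N A x s + \<theta> * ((\<Sum>e\<in>{e\<in>A. src N e = s}. f (e, True)) - (\<Sum>e\<in>{e\<in>A. src N e = s}. f (e, False) / gain N e))"
    by (simp only: right_diff_distrib add_diff_eq)
  also have "\<dots> = outflow N A x s + \<theta>" unfolding one by simp
  finally show ?thesis .
qed

lemma step_cost_le:
  assumes fa: "frac_aug N A W x s f" and th: "\<theta> \<ge> 0" and AE: "A \<subseteq> edges N" and finE: "finite (edges N)"
  shows "step_cost N x (augment N x \<theta> f) \<le> \<theta> * aug_cost N A x f"
proof -
  have z: "\<And>r. r \<notin> R x \<Longrightarrow> f r = 0" and fnn: "\<And>r. f r \<ge> 0" using fa unfolding frac_aug_def by auto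
  have pt: "cost N e * max 0 (augment N x \<theta> f e - x e) \<le> (if e \<in> A then \<theta> * (cost N e * f (e, True)) else 0)" for e
  proof (cases "e \<in> A")
    case True
    then have g: "gain N e > 0" "cost N e > 0" using pos[OF True] by auto
    have "augment N x \<theta> f e - x e \<le> \<theta> * f (e, True)"
    proof -
      have "0 \<le> \<theta> * f (e, False) / gain N e" using th fnn[of "(e, False)"] g by simp
      then show ?thesis unfolding augment_def by linarith
    qed
    then have "max 0 (augment N x \<theta> f e - x e) \<le> \<theta> * f (e, True)" using th fnn[of "(e, True)"] by simp
    then have "cost N e * max 0 (augment N x \<theta> f e - x e) \<le> cost N e * (\<theta> * f (e, True))"
      using g by (intro mult_left_mono) auto
    then show ?thesis using True by (simp only: mult_ac if_True)
  next
    case False then show ?thesis using augment_outside[OF z False] by simp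
  qed
  have "step_cost N x (augment N x \<theta> f) \<le> (\<Sum>e\<in>edges N. if e \<in> A then \<theta> * (cost N e * f (e, True)) else 0)"
    unfolding step_cost_def by (rule sum_mono) (rule pt)
  also have "\<dots> = (\<Sum>e\<in>A. \<theta> * (cost N e * f (e, True)))"
  proof -
    have "(\<Sum>e\<in>edges N. if e \<in> A then \<theta> * (cost N e * f (e, True)) else 0) = (\<Sum>e\<in>edges N \<inter> A. \<theta> * (cost N e * f (e, True)))"
      by (rule sum.inter_restrict[symmetric]) (rule finE)
    also have "edges N \<inter> A = A" using AE by (rule Int_absorb1)
    finally show ?thesis .
  qed
  also have "\<dots> = \<theta> * aug_cost N A x f"
  proof -
    have z3: "\<And>r. r \<notin> R x \<Longrightarrow> rcost N r * f r = 0" using z by simp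
    have "aug_cost N A x f = (\<Sum>e\<in>A. cost N e * f (e, True))"
      unfolding aug_cost_def using sum_res[of x "\<lambda>r. rcost N r * f r" "\<lambda>r. True", OF z3] by simp
    then show ?thesis by (simp add: sum_distrib_left)
  qed
  finally show ?thesis .
qed

end

lemma step_cost_tri:
  assumes "\<And>e. e \<in> edges N \<Longrightarrow> cost N e \<ge> 0"
  shows "step_cost N x z \<le> step_cost N x y + step_cost N y z"
  unfolding step_cost_def sum.distrib[symmetric]
proof (rule sum_mono)
  fix e assume "e \<in> edges N"
  then have c: "cost N e \<ge> 0" using assms by simp
  have "max 0 (z e - x e) \<le> max 0 (y e - x e) + max 0 (z e - y e)" by simp
  then have "cost N e * max 0 (z e - x e) \<le> cost N e * (max 0 (y e - x e) + max 0 (z e - y e))"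
    using c by (rule mult_left_mono)
  then show "cost N e * max 0 (z e - x e) \<le> cost N e * max 0 (y e - x e) + cost N e * max 0 (z e - y e)"
    by (simp only: distrib_left)
qed

lemma step_cost_refl: "step_cost N x x = 0"
  unfolding step_cost_def by simp




context gsetup begin

lemma phase_pot:
  assumes po: "pot_ok x0 p" and ph: "phase N A W s x0 x1" and sW: "s \<in> W" "s \<noteq> \<tau>"
    and noin: "\<And>e. e \<in> A \<Longrightarrow> dst N e \<noteq> s"
    and nn: "\<And>e. x0 e \<ge> 0" and AE: "A \<subseteq> edges N" and finE: "finite (edges N)"
    and costE: "\<And>e. e \<in> edges N \<Longrightarrow> cost N e \<ge> 0"
  shows "\<exists>p'. pot_ok x1 p' \<and> (\<forall>v. p v \<le> p' v) \<and> step_cost N x0 x1 \<le> p' s \<and>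
     (\<forall>e. e \<notin> A \<longrightarrow> x1 e = x0 e) \<and> (\<forall>e. x1 e \<ge> 0)"
proof -
  obtain ys where ys: "ys \<noteq> []" "hd ys = x0" "last ys = x1"
    and st: "\<And>i. Suc i < length ys \<Longrightarrow> outflow N A (ys ! i) s < 1 \<and> aug_step N A W s (ys ! i) (ys ! Suc i)"
    using ph unfolding phase_def by blast
  let ?out = "\<lambda>y. outflow N A y s"
  have claim: "i < length ys \<Longrightarrow> (\<exists>p'. pot_ok (ys ! i) p' \<and> (\<forall>v. p v \<le> p' v) \<and>
      step_cost N x0 (ys ! i) \<le> (?out (ys ! i) - ?out x0) * p' s \<and> ?out x0 \<le> ?out (ys ! i) \<and>
      (0 < i \<longrightarrow> ?out (ys ! i) \<le> 1) \<and> (\<forall>e. e \<notin> A \<longrightarrow> (ys ! i) e = x0 e) \<and> (\<forall>e. (ys ! i) e \<ge> 0))" for i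
  proof (induction i)
    case 0
    have "ys ! 0 = x0" using ys by (simp add: hd_conv_nth)
    then show ?case using po nn step_cost_refl[of N x0] by (intro exI[of _ p]) auto
  next
    case (Suc i)
    then have "i < length ys" by simp
    from Suc.IH[OF this] obtain pi where
      IH: "pot_ok (ys ! i) pi" "\<forall>v. p v \<le> pi v"
        "step_cost N x0 (ys ! i) \<le> (?out (ys ! i) - ?out x0) * pi s" "?out x0 \<le> ?out (ys ! i)"
        "\<forall>e. e \<notin> A \<longrightarrow> (ys ! i) e = x0 e" "\<forall>e. (ys ! i) e \<ge> 0"
      by blast
    have "aug_step N A W s (ys ! i) (ys ! Suc i)" using st Suc.prems by blast
    then obtain f \<theta> where ch: "cheapest_aug_path N A W (ys ! i) s f"
      and fe: "feasible_step N A s (ys ! i) f \<theta>" and nx: "ys ! Suc i = augment N (ys ! i) \<theta> f"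
      unfolding aug_step_def by blast
    have th: "\<theta> \<ge> 0" using fe unfolding feasible_step_def by simp
    have fa: "frac_aug N A W (ys ! i) s f" using ch unfolding cheapest_aug_path_def aug_path_def by simp
    have z: "\<And>r. r \<notin> R (ys ! i) \<Longrightarrow> f r = 0" using fa unfolding frac_aug_def by auto
    define q where "q = qpot (ys ! i) pi"
    have sp: "pot_ok (ys ! Suc i) q" "\<forall>v. pi v \<le> q v" "aug_cost N A (ys ! i) f \<le> q s"
      using step_pot[OF IH(1) ch sW th] nx unfolding q_def by auto
    have outs: "?out (ys ! Suc i) = ?out (ys ! i) + \<theta>"
      using outflow_step[OF fa sW noin] nx by simp
    have sc1: "step_cost N (ys ! i) (ys ! Suc i) \<le> \<theta> * aug_cost N A (ys ! i) f"
      using step_cost_le[OF fa th AE finE] nx by simp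
    have d0: "?out (ys ! i) - ?out x0 \<ge> 0" using IH(4) by simp
    have "step_cost N x0 (ys ! Suc i) \<le> step_cost N x0 (ys ! i) + step_cost N (ys ! i) (ys ! Suc i)"
      by (rule step_cost_tri) (rule costE)
    also have "\<dots> \<le> (?out (ys ! i) - ?out x0) * pi s + \<theta> * aug_cost N A (ys ! i) f"
      using IH(3) sc1 by simp
    also have "\<dots> \<le> (?out (ys ! i) - ?out x0) * q s + \<theta> * q s"
      using d0 sp th IH(2) by (intro add_mono mult_left_mono) auto
    also have "\<dots> = (?out (ys ! Suc i) - ?out x0) * q s" using outs by (simp add: algebra_simps)
    finally have c3: "step_cost N x0 (ys ! Suc i) \<le> (?out (ys ! Suc i) - ?out x0) * q s" .
    have c4: "?out x0 \<le> ?out (ys ! Suc i)" using outs IH(4) th by simp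
    have c5: "?out (ys ! Suc i) \<le> 1" using fe nx unfolding feasible_step_def by simp
    have c6: "\<forall>e. e \<notin> A \<longrightarrow> (ys ! Suc i) e = x0 e" using augment_outside[OF z] IH(5) nx by simp
    have c7: "\<forall>e. (ys ! Suc i) e \<ge> 0"
    proof
      fix e show "(ys ! Suc i) e \<ge> 0"
      proof (cases "e \<in> A")
        case True then show ?thesis using fe nx unfolding feasible_step_def by simp
      next
        case False then show ?thesis using c6 nn by simp
      qed
    qed
    have c2: "\<forall>v. p v \<le> q v" using IH(2) sp(2) order_trans by blast
    show ?case using sp(1) c2 c3 c4 c5 c6 c7 by blast
  qed
  define n where "n = length ys - 1"
  have n: "n < length ys" and x1n: "ys ! n = x1" using ys unfolding n_def by (auto simp: last_conv_nth)
  obtain p' where P: "pot_ok x1 p'" "\<forall>v. p v \<le> p' v"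
    "step_cost N x0 x1 \<le> (?out x1 - ?out x0) * p' s" "?out x0 \<le> ?out x1"
    "0 < n \<longrightarrow> ?out x1 \<le> 1" "\<forall>e. e \<notin> A \<longrightarrow> x1 e = x0 e" "\<forall>e. x1 e \<ge> 0"
    using claim[OF n] x1n by auto
  have o0: "?out x0 \<ge> 0" unfolding outflow_def using nn by (simp add: sum_nonneg)
  have d1: "?out x1 - ?out x0 \<le> 1"
  proof (cases "n = 0")
    case True then have "x1 = x0" using x1n ys by (simp add: hd_conv_nth)
    then show ?thesis by simp
  next
    case False then show ?thesis using P(5) o0 by simp
  qed
  have ps: "p' s \<ge> 0" using P(1) unfolding pot_ok_def by simp
  have "(?out x1 - ?out x0) * p' s \<le> 1 * p' s" using d1 ps by (intro mult_right_mono) auto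
  then have "step_cost N x0 x1 \<le> p' s" using P(3) by simp
  then show ?thesis using P by blast
qed

end



lemma gsetup_inst:
  assumes inst: "gnet_instance N B s T"
  shows "gsetup N (edges_at N s T t) (verts_at N s T t)"
proof -
  have I: "finite (verts N)" "finite (edges N)" "sink N \<in> verts N"
    "\<And>e. e \<in> edges N \<Longrightarrow> src N e \<in> verts N \<and> dst N e \<in> verts N"
    "\<And>e e'. e \<in> edges N \<Longrightarrow> e' \<in> edges N \<Longrightarrow> \<not> (src N e = dst N e' \<and> dst N e = src N e')"
    "\<And>e. e \<in> edges N \<Longrightarrow> cap N e > 0 \<and> cost N e > 0 \<and> gain N e > 0"
    "\<And>j. j \<in> {1..T} \<Longrightarrow> s j \<in> verts N \<and> s j \<noteq> sink N \<and> (\<forall>e\<in>edges N. dst N e \<noteq> s j)"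
    "\<And>v. v \<in> verts N - {sink N} \<Longrightarrow> \<exists>e\<in>edges N. src N e = v \<and> dst N e = sink N \<and> cap N e = \<infinity> \<and> gain N e = 1 \<and> cost N e = B"
    using inst unfolding gnet_instance_def by blast+
  have nf_dst: "\<not> future s T t (dst N e)" if "e \<in> edges N" for e
    using I(7) that unfolding future_def by fastforce
  have nf_sink: "\<not> future s T t (sink N)"
  proof
    assume "future s T t (sink N)"
    then obtain j where j: "j \<in> {t<..T}" "sink N = s j" unfolding future_def by blast
    then have "j \<in> {1..T}" by auto
    then show False using I(7) j(2) by metis
  qed
  show ?thesis
  proof
    show "finite (edges_at N s T t)" using I(2) unfolding edges_at_def by simp
    show "finite (verts_at N s T t)" using I(1) unfolding verts_at_def by simp
    show "sink N \<in> verts_at N s T t" using I(3) nf_sink unfolding verts_at_def by simp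
  next
    fix e assume "e \<in> edges_at N s T t"
    then have e: "e \<in> edges N" "\<not> future s T t (src N e)" unfolding edges_at_def by auto
    show "src N e \<in> verts_at N s T t \<and> dst N e \<in> verts_at N s T t"
      using e I(4) nf_dst unfolding verts_at_def by auto
    show "src N e \<noteq> dst N e" using I(5)[OF e(1) e(1)] by auto
    show "cost N e > 0 \<and> gain N e > 0" using I(6)[OF e(1)] by simp
  next
    fix v assume v: "v \<in> verts_at N s T t" "v \<noteq> sink N"
    then obtain e where e: "e \<in> edges N" "src N e = v" "dst N e = sink N" "cap N e = \<infinity>"
      using I(8) unfolding verts_at_def by blast
    then have "e \<in> edges_at N s T t" using v unfolding edges_at_def verts_at_def by simp
    then show "\<exists>e\<in>edges_at N s T t. src N e = v \<and> dst N e = sink N \<and> cap N e = \<infinity>" using e by blast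
  qed
qed

theorem lemma3:
  fixes N :: "('v, 'e) gnet" and B :: real and s :: "nat \<Rightarrow> 'v" and T :: nat
    and X :: "nat \<Rightarrow> 'e \<Rightarrow> real"
  assumes "gnet_instance N B s T"
    and "alg_run N s T X"
  shows "(\<Sum>t=1..T. step_cost N (X (t - 1)) (X t))
           \<le> (\<Sum>t=1..T. height N (edges N) (verts N) (X T) (s t))"
proof -
  note inst = assms(1)
  define At where "At t = edges_at N s T t" for t
  define Wt where "Wt t = verts_at N s T t" for t
  have loc: "gsetup N (At t) (Wt t)" for t unfolding At_def Wt_def by (rule gsetup_inst[OF inst])
  have I: "finite (edges N)" "inj_on s {1..T}"
    "\<And>e. e \<in> edges N \<Longrightarrow> cap N e > 0 \<and> cost N e > 0 \<and> gain N e > 0"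
    "\<And>j. j \<in> {1..T} \<Longrightarrow> s j \<in> verts N \<and> s j \<noteq> sink N \<and> (\<forall>e\<in>edges N. dst N e \<noteq> s j)"
    using inst unfolding gnet_instance_def by blast+
  have X0: "X 0 = (\<lambda>_. 0)" and ph: "\<And>t. t \<in> {1..T} \<Longrightarrow> phase N (At t) (Wt t) (s t) (X (t - 1)) (X t)"
    using assms(2) unfolding alg_run_def At_def Wt_def by auto
  have AE: "At t \<subseteq> edges N" for t unfolding At_def edges_at_def by auto
  have Amono: "At t \<subseteq> At (Suc t)" for t unfolding At_def edges_at_def future_def by auto
  have inv: "t \<le> T \<Longrightarrow> (\<exists>p. gsetup.pot_ok N (At t) (X t) p \<and> (\<forall>e. e \<notin> At t \<longrightarrow> X t e = 0) \<and> (\<forall>e. X t e \<ge> 0) \<and>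
      (\<Sum>t'=1..t. step_cost N (X (t' - 1)) (X t')) \<le> (\<Sum>t'=1..t. p (s t')))" for t
  proof (induction t)
    case 0
    have "gsetup.pot_ok N (At 0) (X 0) (\<lambda>_. 0)"
      unfolding gsetup.pot_ok_def[OF loc] using gsetup.R_cost[OF loc] by auto
    then show ?case using X0 by (intro exI[of _ "\<lambda>_. 0"]) auto
  next
    case (Suc t)
    define t1 where "t1 = Suc t"
    have tT: "t \<le> T" "t1 \<in> {1..T}" using Suc.prems unfolding t1_def by auto
    obtain p where P: "gsetup.pot_ok N (At t) (X t) p" "\<forall>e. e \<notin> At t \<longrightarrow> X t e = 0" "\<forall>e. X t e \<ge> 0"
      "(\<Sum>t'=1..t. step_cost N (X (t' - 1)) (X t')) \<le> (\<Sum>t'=1..t. p (s t'))"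
      using Suc.IH tT by blast
    define p1 where "p1 = p(s t1 := 0)"
    have st1: "s t1 \<in> verts N" "s t1 \<noteq> sink N" "\<And>e. e \<in> edges N \<Longrightarrow> dst N e \<noteq> s t1" using I(4)[OF tT(2)] by auto
    have fut: "future s T t (s t1)" unfolding future_def using tT unfolding t1_def
      by (intro bexI[of _ "Suc t"]) auto
    have nfut: "\<not> future s T t1 (s t1)"
    proof
      assume "future s T t1 (s t1)"
      then obtain j where j: "j \<in> {t1<..T}" "s t1 = s j" unfolding future_def by blast
      then have "j \<in> {1..T}" using tT by auto
      then have "t1 = j" using inj_onD[OF I(2) j(2) tT(2)] by simp
      then show False using j by simp
    qed
    have sW: "s t1 \<in> Wt t1" using st1 nfut unfolding Wt_def verts_at_def by simp
    have po1: "gsetup.pot_ok N (At t1) (X t) p1"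
      unfolding gsetup.pot_ok_def[OF loc]
    proof (intro conjI allI ballI)
      fix v show "0 \<le> p1 v" using P(1) unfolding gsetup.pot_ok_def[OF loc] p1_def by simp
    next
      show "p1 (sink N) = 0" using P(1) st1 unfolding gsetup.pot_ok_def[OF loc] p1_def by simp
    next
      fix r assume r: "r \<in> res_edges N (At t1) (X t)"
      obtain e b where eb: "r = (e, b)" by (cases r)
      have eA: "e \<in> At t1" using gsetup.R_fst[OF loc r] eb by simp
      have eE: "e \<in> edges N" using eA AE by auto
      have rc: "rcost N r \<ge> 0" "rgain N r > 0" using gsetup.R_cost[OF loc r] gsetup.R_gain[OF loc r] by auto
      have nn: "\<And>v. p1 v \<ge> 0" using P(1) unfolding gsetup.pot_ok_def[OF loc] p1_def by simp
      show "p1 (rsrc N r) \<le> rcost N r + rgain N r * p1 (rdst N r)"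
      proof (cases "src N e = s t1")
        case True
        then have "e \<notin> At t" using fut unfolding At_def edges_at_def by simp
        then have "X t e = 0" using P(2) by simp
        then have b: "b" using r eb unfolding res_edges_def by auto
        have "p1 (rsrc N r) = 0" using b eb True unfolding p1_def by simp
        then show ?thesis using rc nn[of "rdst N r"] by simp
      next
        case False
        have "\<not> future s T t (src N e)"
        proof
          assume "future s T t (src N e)"
          then obtain j where j: "j \<in> {t<..T}" "src N e = s j" unfolding future_def by blast
          show False
          proof (cases "j = t1")
            case True then show False using j False by simp
          next
            case False
            then have "j \<in> {t1<..T}" using j unfolding t1_def by auto
            then have "future s T t1 (src N e)" using j unfolding future_def by blast
            then show False using eA unfolding At_def edges_at_def by simp
          qed
        qed
        then have eAt: "e \<in> At t" using eE unfolding At_def edges_at_def by simp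
        then have rt: "r \<in> res_edges N (At t) (X t)" using r eb unfolding res_edges_def by auto
        have ne: "rsrc N r \<noteq> s t1" "rdst N r \<noteq> s t1" using False st1(3)[OF eE] eb by (cases b; simp)+
        have "p (rsrc N r) \<le> rcost N r + rgain N r * p (rdst N r)"
          using P(1) rt unfolding gsetup.pot_ok_def[OF loc] by blast
        then show ?thesis using ne unfolding p1_def by simp
      qed
    qed
    have noin: "dst N e \<noteq> s t1" if "e \<in> At t1" for e
    proof -
      have "e \<in> edges N" using AE[of t1] that by blast
      then show ?thesis by (rule st1(3))
    qed
    have costE: "\<And>e. e \<in> edges N \<Longrightarrow> cost N e \<ge> 0" using I(3) less_imp_le by blast
    have pht: "phase N (At t1) (Wt t1) (s t1) (X t) (X t1)" using ph[OF tT(2)] unfolding t1_def by simp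
    obtain p2 where P2: "gsetup.pot_ok N (At t1) (X t1) p2" "\<forall>v. p1 v \<le> p2 v"
      "step_cost N (X t) (X t1) \<le> p2 (s t1)" "\<forall>e. e \<notin> At t1 \<longrightarrow> X t1 e = X t e" "\<forall>e. X t1 e \<ge> 0"
      using gsetup.phase_pot[OF loc[of t1] po1 pht sW st1(2) noin P(3)[rule_format] AE[of t1] I(1) costE] by blast
    have z: "\<forall>e. e \<notin> At t1 \<longrightarrow> X t1 e = 0"
    proof (intro allI impI)
      fix e assume e: "e \<notin> At t1"
      then have "e \<notin> At t" using Amono[of t] unfolding t1_def by blast
      then show "X t1 e = 0" using P2(4) P(2) e by simp
    qed
    have sum_eq: "(\<Sum>t'=1..t. p (s t')) = (\<Sum>t'=1..t. p1 (s t'))"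
    proof (rule sum.cong)
      fix t' assume t': "t' \<in> {1..t}"
      then have "t' \<in> {1..T}" "t' \<noteq> t1" using tT unfolding t1_def by auto
      then have "s t' \<noteq> s t1" using inj_onD[OF I(2), of t' t1] tT(2) by blast
      then show "p (s t') = p1 (s t')" unfolding p1_def by simp
    qed simp
    have "(\<Sum>t'=1..t1. step_cost N (X (t' - 1)) (X t')) = (\<Sum>t'=1..t. step_cost N (X (t' - 1)) (X t')) + step_cost N (X t) (X t1)"
      unfolding t1_def by simp
    also have "\<dots> \<le> (\<Sum>t'=1..t. p1 (s t')) + p2 (s t1)" using P(4) P2(3) sum_eq by simp
    also have "\<dots> \<le> (\<Sum>t'=1..t. p2 (s t')) + p2 (s t1)" using P2(2) by (intro add_mono sum_mono) auto
    also have "\<dots> = (\<Sum>t'=1..t1. p2 (s t'))" unfolding t1_def by simp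
    finally show ?case using P2 z unfolding t1_def by blast
  qed
  obtain p where P: "gsetup.pot_ok N (At T) (X T) p"
    "(\<Sum>t'=1..T. step_cost N (X (t' - 1)) (X t')) \<le> (\<Sum>t'=1..T. p (s t'))"
    using inv[of T] by blast
  have AT: "At T = edges N" unfolding At_def edges_at_def future_def by auto
  have WT: "Wt T = verts N" unfolding Wt_def verts_at_def future_def by auto
  have locT: "gsetup N (edges N) (verts N)" using loc[of T] AT WT by simp
  have PT: "gsetup.pot_ok N (edges N) (X T) p" using P(1) AT by simp
  have "(\<Sum>t'=1..T. p (s t')) \<le> (\<Sum>t=1..T. height N (edges N) (verts N) (X T) (s t))"
  proof (rule sum_mono)
    fix t assume t: "t \<in> {1..T}"
    have sv: "s t \<in> verts N" "s t \<noteq> sink N" using I(4)[OF t] by auto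
    obtain r where r: "r \<in> res_edges N (edges N) (X T)" "rsrc N r = s t" "rdst N r = sink N"
      using gsetup.dummy_res[OF locT sv] by blast
    have "gsetup.ss N (edges N) (X T) (s t) [r] []" using gsetup.ss_single[OF locT r sv(2)] .
    then obtain g where g: "aug_path N (edges N) (verts N) (X T) (s t) g"
      using gsetup.ss_aug[OF locT] sv by blast
    show "p (s t) \<le> height N (edges N) (verts N) (X T) (s t)"
      unfolding height_def
    proof (rule cInf_greatest)
      show "{aug_cost N (edges N) (X T) f |f. aug_path N (edges N) (verts N) (X T) (s t) f} \<noteq> {}"
        using g by blast
    next
      fix y assume "y \<in> {aug_cost N (edges N) (X T) f |f. aug_path N (edges N) (verts N) (X T) (s t) f}"
      then obtain f where f: "aug_path N (edges N) (verts N) (X T) (s t) f" "y = aug_cost N (edges N) (X T) f" by blast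
      then have "frac_aug N (edges N) (verts N) (X T) (s t) f" unfolding aug_path_def by simp
      then show "p (s t) \<le> y" using gsetup.pot_le_cost[OF locT PT] f sv by simp
    qed
  qed
  then show ?thesis using P(2) by simp
qed


end
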